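(* For all positive integers $n,d,L$, $|S_n^{(d,L)}|=|S_n^{(L,d)}|$ and $|I_n^{(d,L)}|=|I_n^{(L,d)}|$.
   Context: $S_n^{(d,L)}$ denotes the set of permutations $\pi\in S_n$ that avoid both patterns $d\cdots1(d+1)$ and $1\cdots(L+1)$, and $I_n^{(d,L)}$ its subset of involutions. A permutation avoids $1\cdots(L+1)$ if it has no increasing subsequence of length $L+1$; it avoids $d\cdots1(d+1)$ if (in one-line notation) there are no indices $i_1<\dots<i_{d+1}$ with $\pi(i_1)>\dots>\pi(i_d)$ and $\pi(i_{d+1})>\pi(i_1)$. *)

theory Defs
  imports "HOL-Combinatorics.Permutations"
begin

text \<open>Permutations of [n] are represented as bijections of {0..<n} (identity elsewhere),
  one-line notation p 0, p 1, ..., p (n-1).\<close>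

definition contains_incr :: "nat \<Rightarrow> (nat \<Rightarrow> nat) \<Rightarrow> nat \<Rightarrow> bool" where
  "contains_incr n p k \<longleftrightarrow> (\<exists>f::nat \<Rightarrow> nat. (\<forall>j<k. f j < n) \<and>
      (\<forall>j. Suc j < k \<longrightarrow> f j < f (Suc j) \<and> p (f j) < p (f (Suc j))))"

text \<open>p contains the pattern d ... 1 (d+1): indices i_0 < ... < i_d below n with
  p i_0 > ... > p i_{d-1} and p i_d > p i_0.\<close>
definition contains_dec_pat :: "nat \<Rightarrow> (nat \<Rightarrow> nat) \<Rightarrow> nat \<Rightarrow> bool" where
  "contains_dec_pat n p d \<longleftrightarrow> (\<exists>f::nat \<Rightarrow> nat. (\<forall>j\<le>d. f j < n) \<and>
      (\<forall>j. Suc j \<le> d \<longrightarrow> f j < f (Suc j)) \<and>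
      (\<forall>j. Suc j < d \<longrightarrow> p (f (Suc j)) < p (f j)) \<and>
      p (f 0) < p (f d))"

definition Sdl :: "nat \<Rightarrow> nat \<Rightarrow> nat \<Rightarrow> (nat \<Rightarrow> nat) set" where
  "Sdl n d L = {p. p permutes {0..<n} \<and> \<not> contains_dec_pat n p d \<and> \<not> contains_incr n p (L + 1)}"

definition Idl :: "nat \<Rightarrow> nat \<Rightarrow> nat \<Rightarrow> (nat \<Rightarrow> nat) set" where
  "Idl n d L = {p \<in> Sdl n d L. p \<circ> p = id}"

end

theory Submission
  imports Defs "HOL-Library.Sublist"
begin

section \<open>Partitions as functions\<close>

definition ptn :: "(nat \<Rightarrow> nat) \<Rightarrow> bool" where
  "ptn l \<longleftrightarrow> (\<forall>i. l (Suc i) \<le> l i) \<and> (\<exists>N. \<forall>i\<ge>N. l i = 0)"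

definition addc :: "(nat \<Rightarrow> nat) \<Rightarrow> nat \<Rightarrow> nat \<Rightarrow> nat" where
  "addc l r = l(r := Suc (l r))"

definition adj :: "(nat \<Rightarrow> nat) \<Rightarrow> (nat \<Rightarrow> nat) \<Rightarrow> bool" where
  "adj l m \<longleftrightarrow> m = l \<or> (\<exists>r. m = addc l r \<and> ptn m)"

definition emp :: "nat \<Rightarrow> nat" where "emp = (\<lambda>_. 0)"

lemma ptn_emp[simp]: "ptn emp"
  unfolding ptn_def emp_def by auto

lemma ptn_antimono: "ptn l \<Longrightarrow> i \<le> j \<Longrightarrow> l j \<le> l i"
  unfolding ptn_def by (metis lift_Suc_antimono_le)

lemma addc_ge: "l \<le> addc l r"
  unfolding addc_def le_fun_def by auto

lemma adj_le: "adj l m \<Longrightarrow> l \<le> m"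
  unfolding adj_def using addc_ge by auto

lemma adj_ptn: "ptn l \<Longrightarrow> adj l m \<Longrightarrow> ptn m"
  unfolding adj_def by auto

lemma adj_refl[simp]: "adj l l"
  unfolding adj_def by auto

lemma ptn_max: "ptn a \<Longrightarrow> ptn b \<Longrightarrow> ptn (\<lambda>i. max (a i) (b i))"
  unfolding ptn_def
  apply safe
   apply (meson max.mono)
  subgoal for N M by (rule exI[of _ "max N M"]) auto
  done

lemma ptn_min: "ptn a \<Longrightarrow> ptn b \<Longrightarrow> ptn (\<lambda>i. min (a i) (b i))"
  unfolding ptn_def
  apply safe
   apply (meson min.mono)
  subgoal for N M by (rule exI[of _ "N"]) auto
  done

section \<open>Fomin local rules\<close>

definition fwd :: "(nat \<Rightarrow> nat) \<Rightarrow> (nat \<Rightarrow> nat) \<Rightarrow> (nat \<Rightarrow> nat) \<Rightarrow> bool \<Rightarrow> (nat \<Rightarrow> nat)" where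
  "fwd l m v b = (if b then addc l 0 else if m = l then v else if v = l then m
     else if m \<noteq> v then (\<lambda>i. max (m i) (v i))
     else addc m (Suc (LEAST r. m r \<noteq> l r)))"

definition revr :: "(nat \<Rightarrow> nat) \<Rightarrow> (nat \<Rightarrow> nat) \<Rightarrow> (nat \<Rightarrow> nat) \<Rightarrow> (nat \<Rightarrow> nat) \<times> bool" where
  "revr m v p = (if m = v then
       (if p = m then (m, False) else if p 0 \<noteq> m 0 then (m, True)
        else (let s = (LEAST r. p r \<noteq> m r) in (m(s - 1 := m (s - 1) - 1), False)))
     else (if p = m then (v, False) else if p = v then (m, False)
        else (\<lambda>i. min (m i) (v i), False)))"

lemma fwd_sym: "fwd l m v b = fwd l v m b"
  unfolding fwd_def by (auto simp: max.commute)

lemma addc_neq: "addc l r \<noteq> l"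
  unfolding addc_def by (metis fun_upd_same n_not_Suc_n)

lemma addc_inj: "addc l r = addc l s \<Longrightarrow> r = s"
  unfolding addc_def by (metis fun_upd_apply n_not_Suc_n)

lemma least_addc: "(LEAST r'. addc l r r' \<noteq> l r') = r"
  unfolding addc_def by (rule Least_equality) (auto split: if_splits)

lemma ptn_addc0: "ptn l \<Longrightarrow> ptn (addc l 0)"
  unfolding ptn_def addc_def
  apply safe
   apply (metis fun_upd_apply le_SucI nat.distinct(1))
  subgoal for N by (rule exI[of _ "Suc N"]) auto
  done

lemma ptn_addc_next:
  assumes "ptn l" "ptn (addc l r)"
  shows "ptn (addc (addc l r) (Suc r))"
proof -
  have a: "l (Suc r) \<le> l r" using assms(1) unfolding ptn_def by auto
  obtain N where N: "\<forall>i\<ge>N. addc l r i = 0" using assms(2) unfolding ptn_def by auto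
  have m: "\<forall>i. addc l r (Suc i) \<le> addc l r i" using assms(2) unfolding ptn_def by auto
  show ?thesis unfolding ptn_def
  proof safe
    fix i
    show "addc (addc l r) (Suc r) (Suc i) \<le> addc (addc l r) (Suc r) i"
      using m[rule_format, of i] a m[rule_format, of "Suc r"]
      by (cases "i = r"; cases "i = Suc r") (auto simp: addc_def)
  next
    show "\<exists>N. \<forall>i\<ge>N. addc (addc l r) (Suc r) i = 0"
      apply (rule exI[of _ "max N (Suc (Suc r))"]) using N by (auto simp: addc_def)
  qed
qed

lemma max_addc:
  assumes "r \<noteq> s"
  shows "(\<lambda>i. max (addc l r i) (addc l s i)) = addc (addc l r) s"
  using assms unfolding addc_def by (auto simp: fun_eq_iff)

lemma min_addc:
  assumes "r \<noteq> s"
  shows "(\<lambda>i. min (addc l r i) (addc l s i)) = l"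
  using assms unfolding addc_def by (auto simp: fun_eq_iff)

lemma addc_comm: "addc (addc l r) s = addc (addc l s) r"
  unfolding addc_def by (auto simp: fun_eq_iff)

lemma fwd_props:
  assumes l: "ptn l" and am: "adj l m" and av: "adj l v" and b: "b \<longrightarrow> m = l \<and> v = l"
  defines "p \<equiv> fwd l m v b"
  shows "ptn p \<and> adj m p \<and> adj v p \<and> (p \<noteq> v \<longleftrightarrow> m \<noteq> l \<or> b) \<and> (p \<noteq> m \<longleftrightarrow> v \<noteq> l \<or> b)
     \<and> revr m v p = (l, b)"
proof (cases b)
  case True
  then have mv: "m = l" "v = l" using b by auto
  have "p = addc l 0" using True unfolding p_def fwd_def by auto
  moreover have "addc l 0 0 \<noteq> l 0" unfolding addc_def by auto
  ultimately show ?thesis using mv True ptn_addc0[OF l] addc_neq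
    unfolding adj_def revr_def by auto
next
  case False
  note nb = False
  show ?thesis
  proof (cases "m = l")
    case True
    then have pv: "p = v" using nb unfolding p_def fwd_def by auto
    show ?thesis
    proof (cases "v = l")
      case True
      then show ?thesis using pv \<open>m = l\<close> nb l unfolding revr_def by auto
    next
      case False
      then show ?thesis using pv \<open>m = l\<close> nb l av adj_ptn[OF l av] unfolding revr_def by auto
    qed
  next
    case mne: False
    show ?thesis
    proof (cases "v = l")
      case True
      then have pm: "p = m" using nb mne unfolding p_def fwd_def by auto
      show ?thesis using pm True mne nb am adj_ptn[OF l am] unfolding revr_def by auto
    next
      case vne: False
      obtain r where r: "m = addc l r" "ptn m" using am mne unfolding adj_def by auto
      obtain s where s: "v = addc l s" "ptn v" using av vne unfolding adj_def by auto
      show ?thesis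
      proof (cases "r = s")
        case False
        have pe: "p = addc (addc l r) s" using nb mne vne r s False addc_inj
          unfolding p_def fwd_def by (auto simp: max_addc)
        have pp: "ptn p" using pe ptn_max[OF r(2) s(2)] max_addc[OF False, of l] r(1) s(1) by simp
        have "p \<noteq> m" "p \<noteq> v" using pe r s addc_neq addc_comm by metis+
        moreover have "revr m v p = (l, b)" using \<open>p \<noteq> m\<close> \<open>p \<noteq> v\<close> r s False nb addc_inj
          unfolding revr_def by (auto simp: min_addc)
        ultimately show ?thesis using pp pe r s addc_comm mne vne nb unfolding adj_def by metis
      next
        case True
        have mv: "m = v" using True r s by auto
        have pe: "p = addc m (Suc r)" using nb mne vne mv r
          unfolding p_def fwd_def by (auto simp: least_addc)
        have pp: "ptn p" using pe r ptn_addc_next l by auto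
        have "p \<noteq> m" using pe addc_neq by auto
        have p0: "p 0 = m 0" using pe unfolding addc_def by auto
        have lst: "(LEAST r'. p r' \<noteq> m r') = Suc r" using pe least_addc by auto
        have "m(r := m r - 1) = l" using r unfolding addc_def by (auto simp: fun_eq_iff)
        then have "revr m v p = (l, b)" using mv \<open>p \<noteq> m\<close> p0 lst nb unfolding revr_def by (auto simp: Let_def)
        then show ?thesis using pp pe \<open>p \<noteq> m\<close> mv mne nb unfolding adj_def by auto
      qed
    qed
  qed
qed

lemma adj_cases: "adj m p \<Longrightarrow> p \<noteq> m \<Longrightarrow> \<exists>r. p = addc m r"
  unfolding adj_def by auto

lemma addc_inj2: "addc a r = addc b r \<Longrightarrow> a = b"
  unfolding addc_def by (auto simp: fun_eq_iff split: if_splits)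

lemma revr_props:
  assumes m: "ptn m" and v: "ptn v" and p: "ptn p" and amp: "adj m p" and avp: "adj v p"
    and lb: "revr m v p = (l, b)"
  shows "ptn l \<and> adj l m \<and> adj l v \<and> (b \<longrightarrow> m = l \<and> v = l) \<and> fwd l m v b = p"
proof (cases "m = v")
  case True
  note mv = True
  show ?thesis
  proof (cases "p = m")
    case True
    then show ?thesis using mv lb m unfolding revr_def fwd_def by auto
  next
    case pne: False
    obtain r where r: "p = addc m r" using adj_cases[OF amp pne] by auto
    show ?thesis
    proof (cases "r = 0")
      case True
      then have "p 0 \<noteq> m 0" using r unfolding addc_def by auto
      then have "l = m" "b" using lb mv pne unfolding revr_def by auto
      then show ?thesis using mv r True m unfolding fwd_def by auto
    next
      case False
      then have p0: "p 0 = m 0" using r unfolding addc_def by auto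
      have lst: "(LEAST r'. p r' \<noteq> m r') = r" using r least_addc by auto
      have ld: "l = m(r - 1 := m (r - 1) - 1)" "\<not> b" using lb mv pne p0 lst unfolding revr_def
        by (auto simp: Let_def)
      have "p r \<le> p (r - 1)" using p False unfolding ptn_def by (metis Suc_pred' neq0_conv)
      then have le: "Suc (m r) \<le> m (r - 1)" using r False unfolding addc_def by (auto split: if_splits)
      have ml: "m = addc l (r - 1)" using ld le False unfolding addc_def by (auto simp: fun_eq_iff)
      have pl: "ptn l" unfolding ptn_def
      proof safe
        fix i
        have mm: "m (Suc i) \<le> m i" using m unfolding ptn_def by auto
        show "l (Suc i) \<le> l i"
        proof (cases "Suc i = r - 1")
          case True
          then show ?thesis using mm unfolding ld by auto
        next
          case False
          then show ?thesis using mm le \<open>r \<noteq> 0\<close> unfolding ld by (cases "i = r - 1") auto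
        qed
      next
        obtain N where "\<forall>i\<ge>N. m i = 0" using m unfolding ptn_def by auto
        then show "\<exists>N. \<forall>i\<ge>N. l i = 0" unfolding ld by (intro exI[of _ N]) auto
      qed
      have "fwd l m v b = addc m (Suc (r - 1))"
        using ld(2) mv ml addc_neq least_addc unfolding fwd_def by auto
      then have "fwd l m v b = p" using r False by auto
      then show ?thesis using pl ml m mv ld(2) unfolding adj_def by auto
    qed
  qed
next
  case mvne: False
  show ?thesis
  proof (cases "p = m")
    case True
    then have "p \<noteq> v" using mvne by auto
    then obtain r where r: "m = addc v r" using adj_cases[OF avp] True by auto
    have "l = v" "\<not> b" using lb True mvne unfolding revr_def by auto
    then show ?thesis using r m v True mvne unfolding adj_def fwd_def by auto
  next
    case pm: False
    show ?thesis
    proof (cases "p = v")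
      case True
      obtain r where r: "v = addc m r" using adj_cases[OF amp] True pm by auto
      have "l = m" "\<not> b" using lb True mvne pm unfolding revr_def by auto
      then show ?thesis using r m v True mvne unfolding adj_def fwd_def by auto
    next
      case pv: False
      have ld: "l = (\<lambda>i. min (m i) (v i))" "\<not> b" using lb pm pv mvne unfolding revr_def by auto
      obtain r where r: "p = addc m r" using adj_cases[OF amp pm] by auto
      obtain s where s: "p = addc v s" using adj_cases[OF avp pv] by auto
      have rs: "r \<noteq> s" using r s mvne addc_inj2 by metis
      define q where "q = p(r := p r - 1, s := p s - 1)"
      have pr: "p r = Suc (m r)" "\<And>i. i \<noteq> r \<Longrightarrow> p i = m i" using r unfolding addc_def by auto
      have ps: "p s = Suc (v s)" "\<And>i. i \<noteq> s \<Longrightarrow> p i = v i" using s unfolding addc_def by auto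
      have mq: "m = addc q s"
      proof
        fix i
        consider "i = s" | "i = r" | "i \<noteq> r \<and> i \<noteq> s" by blast
        then show "m i = addc q s i"
        proof cases
          case 1 then show ?thesis using pr(2)[of s] ps(1) rs unfolding q_def addc_def by simp
        next
          case 2 then show ?thesis using pr(1) rs unfolding q_def addc_def by simp
        next
          case 3 then show ?thesis using pr(2)[of i] unfolding q_def addc_def by simp
        qed
      qed
      have vq: "v = addc q r"
      proof
        fix i
        consider "i = s" | "i = r" | "i \<noteq> r \<and> i \<noteq> s" by blast
        then show "v i = addc q r i"
        proof cases
          case 1 then show ?thesis using ps(1) rs unfolding q_def addc_def by simp
        next
          case 2 then show ?thesis using ps(2)[of r] pr(1) rs unfolding q_def addc_def by simp
        next
          case 3 then show ?thesis using ps(2)[of i] unfolding q_def addc_def by simp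
        qed
      qed
      have lq: "l = q" using ld mq vq min_addc rs by (metis min_addc)
      have pl: "ptn l" using ptn_min[OF m v] ld by simp
      have "fwd l m v b = (\<lambda>i. max (m i) (v i))"
        using ld(2) mq vq lq addc_neq mvne unfolding fwd_def by auto
      also have "\<dots> = p" using mq vq rs r by (simp add: max_addc[OF rs[symmetric]]) 
      finally show ?thesis using pl mq vq lq ld(2) m v unfolding adj_def by auto
    qed
  qed
qed


section \<open>Growth diagrams\<close>

definition ppm :: "(nat \<times> nat) set \<Rightarrow> bool" where
  "ppm X \<longleftrightarrow> (\<forall>a\<in>X. \<forall>b\<in>X. (fst a = fst b \<or> snd a = snd b) \<longrightarrow> a = b)"

fun grow :: "(nat \<times> nat) set \<Rightarrow> nat \<Rightarrow> nat \<Rightarrow> nat \<Rightarrow> nat" where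
  "grow X 0 j = emp"
| "grow X (Suc i) 0 = emp"
| "grow X (Suc i) (Suc j) = fwd (grow X i j) (grow X (Suc i) j) (grow X i (Suc j)) ((i, j) \<in> X)"

lemma grow_0_right[simp]: "grow X i 0 = emp"
  by (cases i) auto

definition ginv :: "(nat \<times> nat) set \<Rightarrow> nat \<Rightarrow> nat \<Rightarrow> bool" where
  "ginv X i j \<longleftrightarrow> ptn (grow X i j) \<and> adj (grow X i j) (grow X (Suc i) j)
     \<and> (grow X (Suc i) j \<noteq> grow X i j \<longleftrightarrow> (\<exists>y<j. (i, y) \<in> X))
     \<and> adj (grow X i j) (grow X i (Suc j))
     \<and> (grow X i (Suc j) \<noteq> grow X i j \<longleftrightarrow> (\<exists>x<i. (x, j) \<in> X))"

lemma cell_ok: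
  assumes X: "ppm X" and g: "ginv X i j"
  defines "l \<equiv> grow X i j" and "m \<equiv> grow X (Suc i) j" and "v \<equiv> grow X i (Suc j)"
    and "p \<equiv> grow X (Suc i) (Suc j)" and "b \<equiv> (i, j) \<in> X"
  shows "ptn p \<and> adj m p \<and> adj v p \<and> (p \<noteq> v \<longleftrightarrow> m \<noteq> l \<or> b) \<and> (p \<noteq> m \<longleftrightarrow> v \<noteq> l \<or> b)
     \<and> revr m v p = (l, b) \<and> ptn l \<and> adj l m \<and> adj l v \<and> (b \<longrightarrow> m = l \<and> v = l)"
proof -
  have bb: "b \<longrightarrow> m = l \<and> v = l"
  proof
    assume b
    have "\<not> (\<exists>y<j. (i, y) \<in> X)"
    proof
      assume "\<exists>y<j. (i, y) \<in> X"
      then obtain y where "y < j" "(i, y) \<in> X" by auto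
      then show False using X \<open>b\<close> unfolding ppm_def b_def by (metis fst_conv less_irrefl prod.inject)
    qed
    moreover have "\<not> (\<exists>x<i. (x, j) \<in> X)"
    proof
      assume "\<exists>x<i. (x, j) \<in> X"
      then obtain x where "x < i" "(x, j) \<in> X" by auto
      then show False using X \<open>b\<close> unfolding ppm_def b_def by (metis snd_conv less_irrefl prod.inject)
    qed
    ultimately show "m = l \<and> v = l" using g unfolding ginv_def l_def m_def v_def by auto
  qed
  have "p = fwd l m v b" unfolding p_def l_def m_def v_def b_def by simp
  then show ?thesis using fwd_props[of l m v b] g bb unfolding ginv_def l_def m_def v_def by auto
qed

lemma grow_inv:
  assumes X: "ppm X"
  shows "ginv X i j"
proof (induction "i + j" arbitrary: i j rule: less_induct)
  case less
  have P: "ptn (grow X i j)"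
  proof (cases i)
    case 0 then show ?thesis by simp
  next
    case (Suc i')
    show ?thesis
    proof (cases j)
      case 0 then show ?thesis by simp
    next
      case (Suc j')
      have "ginv X i' j'" using less \<open>i = Suc i'\<close> Suc by auto
      then show ?thesis using cell_ok[OF X, of i' j'] \<open>i = Suc i'\<close> Suc by auto
    qed
  qed
  have C: "adj (grow X i j) (grow X (Suc i) j) \<and> (grow X (Suc i) j \<noteq> grow X i j \<longleftrightarrow> (\<exists>y<j. (i, y) \<in> X))"
  proof (cases j)
    case 0 then show ?thesis by simp
  next
    case (Suc j')
    have "ginv X i j'" using less Suc by auto
    then have "adj (grow X i j) (grow X (Suc i) j) \<and> (grow X (Suc i) j \<noteq> grow X i j \<longleftrightarrow>
        (grow X (Suc i) j' \<noteq> grow X i j' \<or> (i, j') \<in> X))"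
      using cell_ok[OF X, of i j'] Suc by auto
    also have "(grow X (Suc i) j' \<noteq> grow X i j' \<or> (i, j') \<in> X) \<longleftrightarrow> (\<exists>y<j. (i, y) \<in> X)"
      using \<open>ginv X i j'\<close> Suc unfolding ginv_def by (auto simp: less_Suc_eq)
    finally show ?thesis .
  qed
  have R: "adj (grow X i j) (grow X i (Suc j)) \<and> (grow X i (Suc j) \<noteq> grow X i j \<longleftrightarrow> (\<exists>x<i. (x, j) \<in> X))"
  proof (cases i)
    case 0 then show ?thesis by simp
  next
    case (Suc i')
    have "ginv X i' j" using less Suc by auto
    then have "adj (grow X i j) (grow X i (Suc j)) \<and> (grow X i (Suc j) \<noteq> grow X i j \<longleftrightarrow>
        (grow X i' (Suc j) \<noteq> grow X i' j \<or> (i', j) \<in> X))"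
      using cell_ok[OF X, of i' j] Suc by auto
    also have "(grow X i' (Suc j) \<noteq> grow X i' j \<or> (i', j) \<in> X) \<longleftrightarrow> (\<exists>x<i. (x, j) \<in> X)"
      using \<open>ginv X i' j\<close> Suc unfolding ginv_def by (auto simp: less_Suc_eq)
    finally show ?thesis .
  qed
  show ?case using P C R unfolding ginv_def by auto
qed

lemma grow_ptn: "ppm X \<Longrightarrow> ptn (grow X i j)"
  using grow_inv unfolding ginv_def by auto

lemma grow_mono_i: "ppm X \<Longrightarrow> grow X i j \<le> grow X (Suc i) j"
  using grow_inv adj_le unfolding ginv_def by blast

lemma grow_mono_j: "ppm X \<Longrightarrow> grow X i j \<le> grow X i (Suc j)"
  using grow_inv adj_le unfolding ginv_def by blast

lemma grow_mono:
  assumes X: "ppm X" and "i \<le> i'" "j \<le> j'"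
  shows "grow X i j \<le> grow X i' j'"
proof -
  have "grow X i j \<le> grow X i' j"
    using \<open>i \<le> i'\<close> by (induction rule: dec_induct) (use grow_mono_i[OF X] order_trans in blast)+
  also have "\<dots> \<le> grow X i' j'"
    using \<open>j \<le> j'\<close> by (induction rule: dec_induct) (use grow_mono_j[OF X] order_trans in blast)+
  finally show ?thesis .
qed

definition rect :: "nat \<Rightarrow> nat \<Rightarrow> (nat \<times> nat) set" where
  "rect i j = {(a, b). a < i \<and> b < j}"

lemma grow_local:
  assumes "X \<inter> rect i j = Y \<inter> rect i j"
  shows "grow X i j = grow Y i j"
  using assms
proof (induction X i j rule: grow.induct)
  case (3 X i j)
  have sub: "rect i j \<subseteq> rect (Suc i) (Suc j)" "rect (Suc i) j \<subseteq> rect (Suc i) (Suc j)"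
    "rect i (Suc j) \<subseteq> rect (Suc i) (Suc j)" "(i, j) \<in> rect (Suc i) (Suc j)"
    unfolding rect_def by auto
  have r1: "X \<inter> rect i j = Y \<inter> rect i j" "X \<inter> rect (Suc i) j = Y \<inter> rect (Suc i) j"
    "X \<inter> rect i (Suc j) = Y \<inter> rect i (Suc j)"
    using "3.prems" sub by blast+
  have "(i, j) \<in> X \<longleftrightarrow> (i, j) \<in> Y" using "3.prems" sub by blast
  then show ?case using 3 r1 by simp
qed auto

lemma grow_swap: "grow (prod.swap ` X) i j = grow X j i"
proof (induction X i j rule: grow.induct)
  case (1 X j)
  then show ?case by (cases j) auto
next
  case (3 X i j)
  have "(i, j) \<in> prod.swap ` X \<longleftrightarrow> (j, i) \<in> X" by force
  then show ?case using 3 by (simp add: fwd_sym)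
qed auto


section \<open>Conjugate partitions\<close>

definition conj :: "(nat \<Rightarrow> nat) \<Rightarrow> nat \<Rightarrow> nat" where
  "conj l c = card {r. c < l r}"

lemma ptn_finite_supp: "ptn l \<Longrightarrow> finite {r. c < l r}"
proof -
  assume "ptn l"
  then obtain N where "\<forall>i\<ge>N. l i = 0" unfolding ptn_def by auto
  then have "{r. c < l r} \<subseteq> {..<N}" by (auto simp: not_less[symmetric])
  then show ?thesis using finite_subset by blast
qed

lemma downclosed_eq:
  assumes fin: "finite S" and dc: "\<And>r r'. r \<in> S \<Longrightarrow> r' \<le> r \<Longrightarrow> r' \<in> S"
  shows "S = {..<card S}"
proof -
  have ex: "\<exists>r. r \<notin> S" using fin by (meson ex_new_if_finite infinite_UNIV_nat)
  define k where "k = (LEAST r. r \<notin> S)"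
  have kS: "k \<notin> S" unfolding k_def by (rule LeastI_ex[OF ex])
  have "S = {..<k}"
  proof
    show "S \<subseteq> {..<k}"
    proof
      fix r assume "r \<in> S"
      then show "r \<in> {..<k}" using kS dc by (meson lessThan_iff not_le)
    qed
  next
    show "{..<k} \<subseteq> S" unfolding k_def using not_less_Least by auto
  qed
  then show ?thesis by simp
qed

lemma conj_char:
  assumes "ptn l"
  shows "r < conj l c \<longleftrightarrow> c < l r"
proof -
  have "{r. c < l r} = {..<card {r. c < l r}}"
  proof (rule downclosed_eq)
    show "finite {r. c < l r}" using ptn_finite_supp[OF assms] .
    fix r r' assume "r \<in> {r. c < l r}" "r' \<le> r"
    then show "r' \<in> {r. c < l r}" using ptn_antimono[OF assms] by (auto intro: less_le_trans)
  qed
  then show ?thesis unfolding conj_def by blast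
qed

lemma ptn_conj: "ptn l \<Longrightarrow> ptn (conj l)"
  unfolding ptn_def[of "conj l"]
proof safe
  assume l: "ptn l"
  fix i
  show "conj l (Suc i) \<le> conj l i" unfolding conj_def
    by (rule card_mono[OF ptn_finite_supp[OF l]]) auto
next
  assume l: "ptn l"
  show "\<exists>N. \<forall>i\<ge>N. conj l i = 0"
  proof (intro exI allI impI)
    fix i assume "l 0 \<le> i"
    then have "{r. i < l r} = {}" using ptn_antimono[OF l, of 0] by (auto simp: not_less) (meson le0 le_trans not_le)
    then show "conj l i = 0" unfolding conj_def by simp
  qed
qed

lemma conj_conj: "ptn l \<Longrightarrow> conj (conj l) = l"
proof
  fix r assume l: "ptn l"
  have "{c. r < conj l c} = {c. c < l r}" using conj_char[OF l] by auto
  then show "conj (conj l) r = l r" unfolding conj_def[of "conj l"] by simp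
qed

lemma conj_inj: "ptn l \<Longrightarrow> ptn m \<Longrightarrow> conj l = conj m \<Longrightarrow> l = m"
  by (metis conj_conj)

lemma conj_emp[simp]: "conj emp = emp"
  unfolding conj_def emp_def by (auto simp: fun_eq_iff)

lemma conj_addc:
  assumes l: "ptn l" and m: "ptn (addc l r)"
  shows "conj (addc l r) = addc (conj l) (l r)"
proof
  fix c
  show "conj (addc l r) c = addc (conj l) (l r) c"
  proof (cases "c = l r")
    case True
    have "{r'. c < addc l r r'} = insert r {r'. c < l r'}" using True unfolding addc_def by auto
    moreover have "r \<notin> {r'. c < l r'}" using True by auto
    ultimately show ?thesis using True ptn_finite_supp[OF l] unfolding conj_def addc_def by simp
  next
    case False
    have "{r'. c < addc l r r'} = {r'. c < l r'}" using False unfolding addc_def by auto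
    then show ?thesis using False unfolding conj_def addc_def by simp
  qed
qed

lemma adj_conj:
  assumes l: "ptn l" and a: "adj l m"
  shows "adj (conj l) (conj m)"
proof (cases "m = l")
  case True then show ?thesis by simp
next
  case False
  then obtain r where r: "m = addc l r" "ptn m" using a unfolding adj_def by auto
  then have "conj m = addc (conj l) (l r)" using conj_addc l by auto
  then show ?thesis using ptn_conj[OF r(2)] unfolding adj_def by auto
qed

lemma conj_mono0:
  assumes "l \<le> m" "ptn m"
  shows "conj l 0 \<le> conj m 0"
  unfolding conj_def
  apply (rule card_mono[OF ptn_finite_supp[OF assms(2)]])
  using assms(1) by (auto simp: le_fun_def intro: less_le_trans)

definition boxd :: "nat \<Rightarrow> nat \<Rightarrow> (nat \<Rightarrow> nat) \<Rightarrow> bool" where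
  "boxd d L l \<longleftrightarrow> l 0 < L \<and> conj l 0 < d"

lemma boxd_conj: "ptn l \<Longrightarrow> boxd L d (conj l) \<longleftrightarrow> boxd d L l"
  unfolding boxd_def using conj_conj by auto

lemma boxd_mono: "l \<le> m \<Longrightarrow> ptn m \<Longrightarrow> boxd d L m \<Longrightarrow> boxd d L l"
  unfolding boxd_def using conj_mono0[of l m] by (auto simp: le_fun_def intro: le_less_trans)


section \<open>Growth diagrams on Ferrers boards\<close>

definition downset :: "(nat \<times> nat) set \<Rightarrow> bool" where
  "downset D \<longleftrightarrow> (\<forall>a b a' b'. (a, b) \<in> D \<longrightarrow> a' \<le> a \<longrightarrow> b' \<le> b \<longrightarrow> (a', b') \<in> D)"

definition bd :: "(nat \<times> nat) set \<Rightarrow> (nat \<times> nat) set" where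
  "bd D = {(x, y). (x, y) \<notin> D \<and> (x = 0 \<or> y = 0 \<or> (x - 1, y - 1) \<in> D)}"

definition valid :: "(nat \<times> nat) set \<Rightarrow> (nat \<times> nat \<Rightarrow> nat \<Rightarrow> nat) \<Rightarrow> bool" where
  "valid D v \<longleftrightarrow> (\<forall>c\<in>bd D. ptn (v c)) \<and> (\<forall>c\<in>bd D. (fst c = 0 \<or> snd c = 0) \<longrightarrow> v c = emp)
     \<and> (\<forall>x y. (x, y) \<in> bd D \<longrightarrow> (Suc x, y) \<in> bd D \<longrightarrow> adj (v (x, y)) (v (Suc x, y)))
     \<and> (\<forall>x y. (x, y) \<in> bd D \<longrightarrow> (x, Suc y) \<in> bd D \<longrightarrow> adj (v (x, y)) (v (x, Suc y)))"

definition gv :: "(nat \<times> nat) set \<Rightarrow> nat \<times> nat \<Rightarrow> nat \<Rightarrow> nat" where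
  "gv X c = grow X (fst c) (snd c)"

lemma valid_grow: "ppm X \<Longrightarrow> valid D (gv X)"
  unfolding valid_def gv_def using grow_inv[of X] grow_ptn[of X] unfolding ginv_def
  by (auto simp: gv_def)

lemma valid_conj: "valid D v \<Longrightarrow> valid D (conj \<circ> v)"
  unfolding valid_def by (auto simp: adj_conj ptn_conj)

lemma max_cell:
  fixes D :: "(nat \<times> nat) set"
  assumes "finite D" "D \<noteq> {}"
  obtains a b where "(a, b) \<in> D" "\<And>x y. (x, y) \<in> D \<Longrightarrow> x + y \<le> a + b"
proof -
  define M where "M = Max ((\<lambda>c. fst c + snd c) ` D)"
  have "M \<in> (\<lambda>c. fst c + snd c) ` D" unfolding M_def using assms by auto
  then obtain c where c: "c \<in> D" "fst c + snd c = M" by auto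
  have "\<And>x y. (x, y) \<in> D \<Longrightarrow> x + y \<le> M"
  proof -
    fix x y assume "(x, y) \<in> D"
    then have "x + y \<in> (\<lambda>c. fst c + snd c) ` D" by force
    then show "x + y \<le> M" unfolding M_def using assms(1) by simp
  qed
  then show ?thesis using that[of "fst c" "snd c"] c by auto
qed

locale maxcell =
  fixes D a b
  assumes ds: "downset D" and ab: "(a, b) \<in> D" and mx: "\<And>x y. (x, y) \<in> D \<Longrightarrow> x + y \<le> a + b"
begin

lemma only: "(x, y) \<in> D \<Longrightarrow> a \<le> x \<Longrightarrow> b \<le> y \<Longrightarrow> x = a \<and> y = b"
  using mx[of x y] by auto

lemma not_Sa: "(Suc a, b) \<notin> D" using mx[of "Suc a" b] by auto

lemma not_Sb: "(a, Suc b) \<notin> D" using mx[of a "Suc b"] by auto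

lemma ds': "downset (D - {(a, b)})"
  unfolding downset_def
proof (intro allI impI)
  fix x y x' y' assume "(x, y) \<in> D - {(a, b)}" "x' \<le> x" "y' \<le> y"
  note h = this
  have "(x', y') \<in> D" using h ds unfolding downset_def by blast
  moreover have "(x', y') \<noteq> (a, b)"
  proof
    assume "(x', y') = (a, b)"
    then have "x = a \<and> y = b" using only[of x y] h by auto
    then show False using h by auto
  qed
  ultimately show "(x', y') \<in> D - {(a, b)}" by auto
qed

lemma corners: "(Suc a, Suc b) \<in> bd D" "(Suc a, b) \<in> bd D" "(a, Suc b) \<in> bd D" "(a, b) \<notin> bd D"
proof -
  have "(Suc a, Suc b) \<notin> D"
  proof
    assume "(Suc a, Suc b) \<in> D"
    then have "(Suc a, b) \<in> D" using ds unfolding downset_def by (meson le_Suc_eq order_refl)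
    then show False using not_Sa by simp
  qed
  then show "(Suc a, Suc b) \<in> bd D" using ab unfolding bd_def by auto
  have "(a, b - 1) \<in> D" using ds ab unfolding downset_def by (meson diff_le_self le_refl)
  then show "(Suc a, b) \<in> bd D" using not_Sa unfolding bd_def by auto
  have "(a - 1, b) \<in> D" using ds ab unfolding downset_def by (meson diff_le_self le_refl)
  then show "(a, Suc b) \<in> bd D" using not_Sb unfolding bd_def by auto
  show "(a, b) \<notin> bd D" using ab unfolding bd_def by auto
qed

lemma bd': "bd (D - {(a, b)}) = insert (a, b) (bd D - {(Suc a, Suc b)})"
proof (intro set_eqI iffI)
  fix c assume c: "c \<in> bd (D - {(a, b)})"
  obtain x y where xy: "c = (x, y)" by (cases c)
  show "c \<in> insert (a, b) (bd D - {(Suc a, Suc b)})"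
  proof (cases "c = (a, b)")
    case False
    then have "(x, y) \<notin> D" using c xy unfolding bd_def by auto
    moreover have "x = 0 \<or> y = 0 \<or> (x - 1, y - 1) \<in> D" using c xy unfolding bd_def by auto
    moreover have "c \<noteq> (Suc a, Suc b)" using c xy unfolding bd_def by auto
    ultimately show ?thesis using xy unfolding bd_def by auto
  qed auto
next
  fix c assume c: "c \<in> insert (a, b) (bd D - {(Suc a, Suc b)})"
  obtain x y where xy: "c = (x, y)" by (cases c)
  show "c \<in> bd (D - {(a, b)})"
  proof (cases "c = (a, b)")
    case True
    have "a = 0 \<or> b = 0 \<or> (a - 1, b - 1) \<in> D" using ds ab unfolding downset_def
      by (metis diff_le_self)
    moreover have "a = 0 \<or> b = 0 \<or> (a - 1, b - 1) \<noteq> (a, b)" by auto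
    ultimately show ?thesis using True unfolding bd_def by auto
  next
    case False
    then have b1: "(x, y) \<in> bd D" "(x, y) \<noteq> (Suc a, Suc b)" using c xy by auto
    have "x = 0 \<or> y = 0 \<or> (x - 1, y - 1) \<in> D - {(a, b)}"
    proof (cases "x = 0 \<or> y = 0")
      case False
      then have "(x - 1, y - 1) \<in> D" using b1 unfolding bd_def by auto
      moreover have "(x - 1, y - 1) \<noteq> (a, b)" using False b1(2) by auto
      ultimately show ?thesis by auto
    qed auto
    then show ?thesis using xy b1 unfolding bd_def by auto
  qed
qed

lemma not_rect: "c \<in> bd D \<Longrightarrow> c \<noteq> (Suc a, Suc b) \<Longrightarrow> (a, b) \<notin> rect (fst c) (snd c)"
proof
  assume c: "c \<in> bd D" "c \<noteq> (Suc a, Suc b)" "(a, b) \<in> rect (fst c) (snd c)"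
  obtain x y where xy: "c = (x, y)" by (cases c)
  then have "a < x" "b < y" using c(3) unfolding rect_def by auto
  then have "(x - 1, y - 1) \<in> D" using c(1) xy unfolding bd_def by auto
  then have "x - 1 = a" "y - 1 = b" using only \<open>a < x\<close> \<open>b < y\<close> by auto
  then show False using c(2) xy \<open>a < x\<close> \<open>b < y\<close> by auto
qed

end

lemma grow_insert_out: "p \<notin> rect i j \<Longrightarrow> grow (insert p X) i j = grow X i j"
  by (rule grow_local) auto

lemma grow_diff_out: "p \<notin> rect i j \<Longrightarrow> grow (X - {p}) i j = grow X i j"
  by (rule grow_local) auto

lemma board_exists:
  assumes "finite D" "downset D" "valid D v"
  shows "\<exists>X\<subseteq>D. ppm X \<and> (\<forall>c\<in>bd D. gv X c = v c)"
  using assms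
proof (induction "card D" arbitrary: D v rule: less_induct)
  case less
  show ?case
  proof (cases "D = {}")
    case True
    have "\<forall>c\<in>bd D. gv {} c = v c"
    proof
      fix c assume "c \<in> bd D"
      then have "fst c = 0 \<or> snd c = 0" using True unfolding bd_def by auto
      moreover then have "gv {} c = emp" unfolding gv_def by (metis grow.simps(1) grow_0_right)
      ultimately show "gv {} c = v c" using less.prems(3) \<open>c \<in> bd D\<close> unfolding valid_def by auto
    qed
    then show ?thesis unfolding ppm_def by auto
  next
    case False
    obtain a b where ab: "(a, b) \<in> D" "\<And>x y. (x, y) \<in> D \<Longrightarrow> x + y \<le> a + b"
      using max_cell[OF less.prems(1) False] by blast
    interpret maxcell D a b using ab less.prems(2) by unfold_locales auto
    define m where "m = v (Suc a, b)"
    define nu where "nu = v (a, Suc b)"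
    define p where "p = v (Suc a, Suc b)"
    obtain l bb where lb: "revr m nu p = (l, bb)" by fastforce
    have vv: "valid D v" by fact
    have pm: "ptn m" "ptn nu" "ptn p" "adj m p" "adj nu p"
      using vv corners unfolding valid_def m_def nu_def p_def by auto
    have rp: "ptn l \<and> adj l m \<and> adj l nu \<and> (bb \<longrightarrow> m = l \<and> nu = l) \<and> fwd l m nu bb = p"
      using revr_props[OF pm lb] .
    define v' where "v' = v((a, b) := l)"
    have bd'': "bd (D - {(a, b)}) = insert (a, b) (bd D - {(Suc a, Suc b)})" by (rule bd')
    have val': "valid (D - {(a, b)}) v'"
      unfolding valid_def
    proof (intro conjI ballI allI impI)
      fix c assume "c \<in> bd (D - {(a, b)})"
      then show "ptn (v' c)" using vv rp unfolding bd'' valid_def v'_def by auto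
    next
      fix c assume c: "c \<in> bd (D - {(a, b)})" "fst c = 0 \<or> snd c = 0"
      show "v' c = emp"
      proof (cases "c = (a, b)")
        case True
        have le: "l \<le> m" "l \<le> nu" using rp adj_le by auto
        have "nu = emp \<or> m = emp" using vv corners c True unfolding valid_def nu_def m_def by auto
        then have "l = emp" using le by (auto simp: le_fun_def emp_def fun_eq_iff)
        then show ?thesis using True unfolding v'_def by simp
      next
        case False
        then show ?thesis using c vv unfolding bd'' valid_def v'_def by auto
      qed
    next
      fix x y assume xy: "(x, y) \<in> bd (D - {(a, b)})" "(Suc x, y) \<in> bd (D - {(a, b)})"
      show "adj (v' (x, y)) (v' (Suc x, y))"
      proof (cases "(x, y) = (a, b)")
        case True
        then show ?thesis using rp unfolding v'_def m_def by auto
      next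
        case False
        have "(Suc x, y) \<noteq> (a, b)"
        proof
          assume "(Suc x, y) = (a, b)"
          then have "(x, y) \<in> D" using ds ab unfolding downset_def by (metis Pair_inject le_refl lessI less_imp_le_nat)
          moreover have "(x, y) \<noteq> (a, b)" using \<open>(Suc x, y) = (a, b)\<close> by auto
          ultimately show False using xy unfolding bd_def by auto
        qed
        then show ?thesis using False xy vv unfolding bd'' valid_def v'_def by auto
      qed
    next
      fix x y assume xy: "(x, y) \<in> bd (D - {(a, b)})" "(x, Suc y) \<in> bd (D - {(a, b)})"
      show "adj (v' (x, y)) (v' (x, Suc y))"
      proof (cases "(x, y) = (a, b)")
        case True
        then show ?thesis using rp unfolding v'_def nu_def by auto
      next
        case False
        have "(x, Suc y) \<noteq> (a, b)"
        proof
          assume "(x, Suc y) = (a, b)"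
          then have "(x, y) \<in> D" using ds ab unfolding downset_def by (metis Pair_inject le_refl lessI less_imp_le_nat)
          moreover have "(x, y) \<noteq> (a, b)" using \<open>(x, Suc y) = (a, b)\<close> by auto
          ultimately show False using xy unfolding bd_def by auto
        qed
        then show ?thesis using False xy vv unfolding bd'' valid_def v'_def by auto
      qed
    qed
    have cd: "card (D - {(a, b)}) < card D" using ab less.prems(1) by (meson card_Diff1_less)
    obtain X' where X': "X' \<subseteq> D - {(a, b)}" "ppm X'" "\<forall>c\<in>bd (D - {(a, b)}). gv X' c = v' c"
      using less.hyps[OF cd _ ds' val'] less.prems(1) by auto
    define X where "X = (if bb then insert (a, b) X' else X')"
    have i1: "(a, b) \<in> bd (D - {(a, b)})" "(Suc a, b) \<in> bd (D - {(a, b)})" "(a, Suc b) \<in> bd (D - {(a, b)})"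
      using bd'' corners by auto
    have gXa: "grow X' a b = l" using X'(3)[rule_format, OF i1(1)] unfolding gv_def v'_def by auto
    have gXm: "grow X' (Suc a) b = m" using X'(3)[rule_format, OF i1(2)] unfolding gv_def v'_def m_def by auto
    have gXn: "grow X' a (Suc b) = nu" using X'(3)[rule_format, OF i1(3)] unfolding gv_def v'_def nu_def by auto
    have gi: "ginv X' a b" using grow_inv[OF X'(2)] .
    have ppmX: "ppm X"
    proof (cases bb)
      case False then show ?thesis using X' unfolding X_def by auto
    next
      case True
      have nc: "\<not> (\<exists>y<b. (a, y) \<in> X')" using gi gXa gXm rp True unfolding ginv_def by auto
      have nr: "\<not> (\<exists>x<a. (x, b) \<in> X')" using gi gXa gXn rp True unfolding ginv_def by auto
      have "\<forall>q\<in>X'. fst q \<noteq> a \<and> snd q \<noteq> b"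
      proof
        fix q assume q: "q \<in> X'"
        obtain x y where xy: "q = (x, y)" by (cases q)
        have "(x, y) \<in> D" "(x, y) \<noteq> (a, b)" using q xy X'(1) by auto
        have "x \<noteq> a"
        proof
          assume "x = a"
          have "y \<le> b"
          proof (rule ccontr)
            assume "\<not> y \<le> b"
            then have "(a, Suc b) \<in> D" using ds \<open>(x, y) \<in> D\<close> \<open>x = a\<close> unfolding downset_def
              by (meson Suc_leI not_le order_refl)
            then show False using not_Sb by simp
          qed
          then show False using nc \<open>x = a\<close> q xy \<open>(x, y) \<noteq> (a, b)\<close> by (auto simp: le_less)
        qed
        moreover have "y \<noteq> b"
        proof
          assume "y = b"
          have "x \<le> a"
          proof (rule ccontr)
            assume "\<not> x \<le> a"
            then have "(Suc a, b) \<in> D" using ds \<open>(x, y) \<in> D\<close> \<open>y = b\<close> unfolding downset_def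
              by (meson Suc_leI not_le order_refl)
            then show False using not_Sa by simp
          qed
          then show False using nr \<open>y = b\<close> q xy \<open>(x, y) \<noteq> (a, b)\<close> by (auto simp: le_less)
        qed
        ultimately show "fst q \<noteq> a \<and> snd q \<noteq> b" using xy by auto
      qed
      then show ?thesis using X'(2) True unfolding X_def ppm_def by auto
    qed
    have XD: "X \<subseteq> D" using X'(1) ab unfolding X_def by auto
    have abX: "(a, b) \<in> X \<longleftrightarrow> bb" using X'(1) unfolding X_def by auto
    have loc: "\<And>i j. (a, b) \<notin> rect i j \<Longrightarrow> grow X i j = grow X' i j"
      unfolding X_def using grow_insert_out by auto
    have "\<forall>c\<in>bd D. gv X c = v c"
    proof
      fix c assume c: "c \<in> bd D"
      show "gv X c = v c"
      proof (cases "c = (Suc a, Suc b)")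
        case True
        have "grow X a b = l" "grow X (Suc a) b = m" "grow X a (Suc b) = nu"
          using loc[of a b] loc[of "Suc a" b] loc[of a "Suc b"] gXa gXm gXn unfolding rect_def by auto
        then have "grow X (Suc a) (Suc b) = fwd l m nu bb" using abX by simp
        then show ?thesis using rp True unfolding gv_def p_def by auto
      next
        case False
        then have "gv X c = gv X' c" using loc not_rect[OF c False] unfolding gv_def by auto
        also have "\<dots> = v' c" using X'(3) c False bd'' by auto
        also have "\<dots> = v c" using c corners(4) unfolding v'_def by auto
        finally show ?thesis .
      qed
    qed
    then show ?thesis using XD ppmX by auto
  qed
qed

lemma board_inj:
  assumes "finite D" "downset D" "X \<subseteq> D" "Y \<subseteq> D" "ppm X" "ppm Y" "\<forall>c\<in>bd D. gv X c = gv Y c"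
  shows "X = Y"
  using assms
proof (induction "card D" arbitrary: D X Y rule: less_induct)
  case less
  show ?case
  proof (cases "D = {}")
    case True then show ?thesis using less.prems by auto
  next
    case False
    obtain a b where ab: "(a, b) \<in> D" "\<And>x y. (x, y) \<in> D \<Longrightarrow> x + y \<le> a + b"
      using max_cell[OF less.prems(1) False] by blast
    interpret maxcell D a b using ab less.prems(2) by unfold_locales auto
    have cX: "revr (grow X (Suc a) b) (grow X a (Suc b)) (grow X (Suc a) (Suc b)) = (grow X a b, (a, b) \<in> X)"
      using cell_ok[OF less.prems(5) grow_inv[OF less.prems(5)]] by auto
    have cY: "revr (grow Y (Suc a) b) (grow Y a (Suc b)) (grow Y (Suc a) (Suc b)) = (grow Y a b, (a, b) \<in> Y)"
      using cell_ok[OF less.prems(6) grow_inv[OF less.prems(6)]] by auto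
    have eq: "grow X (Suc a) b = grow Y (Suc a) b" "grow X a (Suc b) = grow Y a (Suc b)"
      "grow X (Suc a) (Suc b) = grow Y (Suc a) (Suc b)"
      using less.prems(7) corners unfolding gv_def by force+
    have "(grow X a b, (a, b) \<in> X) = (grow Y a b, (a, b) \<in> Y)"
      by (rule trans[OF cX[unfolded eq, symmetric] cY])
    then have e1: "grow X a b = grow Y a b" and e2: "(a, b) \<in> X \<longleftrightarrow> (a, b) \<in> Y"
      by simp_all
    have cd: "card (D - {(a, b)}) < card D" using ab less.prems(1) by (meson card_Diff1_less)
    have "\<forall>c\<in>bd (D - {(a, b)}). gv (X - {(a, b)}) c = gv (Y - {(a, b)}) c"
    proof
      fix c assume c: "c \<in> bd (D - {(a, b)})"
      show "gv (X - {(a, b)}) c = gv (Y - {(a, b)}) c"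
      proof (cases "c = (a, b)")
        case True
        then show ?thesis using e1 grow_diff_out[of "(a, b)" a b] unfolding gv_def rect_def by auto
      next
        case False
        then have c': "c \<in> bd D" "c \<noteq> (Suc a, Suc b)" using c bd' by auto
        have "grow (X - {(a, b)}) (fst c) (snd c) = grow X (fst c) (snd c)"
          "grow (Y - {(a, b)}) (fst c) (snd c) = grow Y (fst c) (snd c)"
          using not_rect[OF c'] grow_diff_out by auto
        then show ?thesis using less.prems(7) c'(1) unfolding gv_def by auto
      qed
    qed
    then have "X - {(a, b)} = Y - {(a, b)}"
      using less.hyps[OF cd _ ds', of "X - {(a, b)}" "Y - {(a, b)}"] less.prems
      unfolding ppm_def by auto
    then show ?thesis using e2 by blast
  qed
qed


section \<open>Row insertion (RSK)\<close>

fun ins_row :: "nat \<Rightarrow> nat list \<Rightarrow> nat option \<times> nat list" where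
  "ins_row x [] = (None, [x])"
| "ins_row x (y # ys) = (if x < y then (Some y, x # ys) else (case ins_row x ys of (b, ys') \<Rightarrow> (b, y # ys')))"

fun ins :: "nat \<Rightarrow> nat list list \<Rightarrow> nat list list" where
  "ins x [] = [[x]]"
| "ins x (R # Rs) = (case ins_row x R of (None, R') \<Rightarrow> R' # Rs | (Some y, R') \<Rightarrow> R' # ins y Rs)"

fun newrow :: "nat \<Rightarrow> nat list list \<Rightarrow> nat" where
  "newrow x [] = 0"
| "newrow x (R # Rs) = (case ins_row x R of (None, _) \<Rightarrow> 0 | (Some y, _) \<Rightarrow> Suc (newrow y Rs))"

definition shape :: "nat list list \<Rightarrow> nat \<Rightarrow> nat" where
  "shape T r = (if r < length T then length (T ! r) else 0)"

definition rsk :: "nat list \<Rightarrow> nat list list" where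
  "rsk w = foldl (\<lambda>T x. ins x T) [] w"

lemma rsk_Nil[simp]: "rsk [] = []" unfolding rsk_def by simp

lemma rsk_snoc[simp]: "rsk (w @ [x]) = ins x (rsk w)" unfolding rsk_def by simp

definition ents :: "nat list list \<Rightarrow> nat set" where
  "ents T = set (concat T)"

definition wf :: "nat list list \<Rightarrow> bool" where
  "wf T \<longleftrightarrow> (\<forall>R\<in>set T. R \<noteq> [] \<and> sorted_wrt (<) R) \<and> sorted_wrt (\<lambda>R S. hd R < hd S) T
     \<and> distinct (concat T)"

lemma ins_row_none_iff: "fst (ins_row x R) = None \<longleftrightarrow> (\<forall>z\<in>set R. \<not> x < z)"
  by (induction R) (auto split: prod.splits)

lemma ins_row_none: "\<forall>z\<in>set R. \<not> x < z \<Longrightarrow> ins_row x R = (None, R @ [x])"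
  by (induction R) auto

lemma ins_row_some_split:
  "\<forall>a\<in>set A. \<not> x < a \<Longrightarrow> x < y \<Longrightarrow> ins_row x (A @ y # B) = (Some y, A @ x # B)"
  by (induction A) auto

lemma ins_row_cases:
  obtains (none) "ins_row x R = (None, R @ [x])" "\<forall>z\<in>set R. \<not> x < z"
  | (some) A y B where "R = A @ y # B" "ins_row x R = (Some y, A @ x # B)" "\<forall>a\<in>set A. \<not> x < a" "x < y"
proof (cases "\<forall>z\<in>set R. \<not> x < z")
  case True
  then show ?thesis using none ins_row_none by auto
next
  case False
  then have "\<exists>z\<in>set R. x < z" by auto
  then obtain A y B where "R = A @ y # B" "x < y" "\<forall>a\<in>set A. \<not> x < a"
    using split_list_first_prop[of R "\<lambda>z. x < z"] by auto
  then show ?thesis using some ins_row_some_split by auto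
qed

lemma shape_Cons: "shape (R # Rs) = (\<lambda>r. case r of 0 \<Rightarrow> length R | Suc r' \<Rightarrow> shape Rs r')"
  unfolding shape_def by (auto simp: fun_eq_iff split: nat.splits)

lemma shape_Nil: "shape [] = emp"
  unfolding shape_def emp_def by auto

lemma shape_ins: "shape (ins x T) = addc (shape T) (newrow x T)"
proof (induction T arbitrary: x)
  case Nil
  then show ?case unfolding shape_def addc_def by (auto simp: fun_eq_iff)
next
  case (Cons R Rs)
  show ?case
  proof (cases rule: ins_row_cases[of x R])
    case none
    then show ?thesis by (auto simp: shape_Cons addc_def fun_eq_iff split: nat.splits)
  next
    case (some A y B)
    then show ?thesis using Cons[of y] by (auto simp: shape_Cons addc_def fun_eq_iff split: nat.splits)
  qed
qed

lemma newrow_le: "newrow x T \<le> length T"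
proof (induction T arbitrary: x)
  case (Cons R Rs)
  then show ?case by (cases rule: ins_row_cases[of x R]) auto
qed simp

lemma ents_Cons: "ents (R # Rs) = set R \<union> ents Rs" unfolding ents_def by auto

lemma ents_ins: "ents (ins x T) = insert x (ents T)"
proof (induction T arbitrary: x)
  case Nil then show ?case unfolding ents_def by auto
next
  case (Cons R Rs)
  show ?case
  proof (cases rule: ins_row_cases[of x R])
    case none then show ?thesis by (auto simp: ents_Cons)
  next
    case (some A y B) then show ?thesis using Cons[of y] by (auto simp: ents_Cons)
  qed
qed

lemma length_concat_ins: "length (concat (ins x T)) = Suc (length (concat T))"
proof (induction T arbitrary: x)
  case (Cons R Rs)
  then show ?case by (cases rule: ins_row_cases[of x R]) auto
qed simp

lemma sorted_row_ins:
  fixes x :: nat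
  assumes "sorted_wrt (<) (A @ y # B)" "\<forall>a\<in>set A. \<not> x < a" "x < y" "x \<notin> set A"
  shows "sorted_wrt (<) (A @ x # B)"
proof -
  have "\<forall>a\<in>set A. a < x"
  proof
    fix a assume "a \<in> set A"
    then have "\<not> x < a" "a \<noteq> x" using assms(2,4) by auto
    then show "a < x" by simp
  qed
  moreover have "\<forall>b\<in>set B. x < b" using assms(1,3) by (auto simp: sorted_wrt_append)
  ultimately show ?thesis using assms(1) by (auto simp: sorted_wrt_append)
qed

lemma wf_Cons: "wf (R # Rs) \<longleftrightarrow> R \<noteq> [] \<and> sorted_wrt (<) R \<and> wf Rs \<and> (\<forall>S\<in>set Rs. hd R < hd S)
   \<and> set R \<inter> ents Rs = {} \<and> distinct R"
  unfolding wf_def ents_def by auto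

lemma wf_Nil[simp]: "wf []" unfolding wf_def by auto

lemma hd_le_sorted: "sorted_wrt (<) S \<Longrightarrow> z \<in> set S \<Longrightarrow> hd S \<le> (z::nat)"
  by (cases S) auto

lemma wf_entries_gt:
  assumes "wf (R # Rs)" "z \<in> ents Rs"
  shows "hd R < z"
proof -
  obtain S where S: "S \<in> set Rs" "z \<in> set S" using assms(2) unfolding ents_def by auto
  have "sorted_wrt (<) S" using assms(1) S(1) unfolding wf_Cons wf_def by auto
  then have hz: "hd S \<le> z" using hd_le_sorted S(2) by auto
  have "hd R < hd S" using assms(1) S(1) unfolding wf_Cons by auto
  with hz
  show ?thesis by auto
qed

lemma wf_ins:
  assumes "wf T" "x \<notin> ents T"
  shows "wf (ins x T)"
  using assms
proof (induction T arbitrary: x)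
  case Nil
  then show ?case unfolding wf_def by auto
next
  case (Cons R Rs)
  have R: "R \<noteq> []" "sorted_wrt (<) R" "wf Rs" "\<forall>S\<in>set Rs. hd R < hd S" "set R \<inter> ents Rs = {}" "distinct R"
    using Cons.prems(1) unfolding wf_Cons by auto
  have xR: "x \<notin> set R" "x \<notin> ents Rs" using Cons.prems(2) by (auto simp: ents_Cons)
  show ?case
  proof (cases rule: ins_row_cases[of x R])
    case none
    have "sorted_wrt (<) (R @ [x])" using R(2) none(2) xR(1) by (auto simp: sorted_wrt_append not_less le_less)
    moreover have "hd (R @ [x]) = hd R" using R(1) by auto
    moreover have "ins x (R # Rs) = (R @ [x]) # Rs" using none by simp
    ultimately show ?thesis using none R xR by (auto simp: distinct_append wf_Cons)
  next
    case (some A y B)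
    have yR: "y \<in> set R" "y \<notin> ents Rs" using some(1) R(5) by auto
    have IH: "wf (ins y Rs)" using Cons.IH[OF R(3) yR(2)] .
    have s1: "sorted_wrt (<) (A @ x # B)" using sorted_row_ins[of A y B x] R(2) some xR(1) by auto
    have hdle: "hd (A @ x # B) \<le> hd R \<and> hd (A @ x # B) < y"
    proof (cases A)
      case Nil then show ?thesis using some by auto
    next
      case (Cons a A')
      have "a < y" using R(2) some(1) Cons by auto
      then show ?thesis using some(1) Cons by auto
    qed
    have gt: "\<forall>z\<in>ents (ins y Rs). hd (A @ x # B) < z"
    proof
      fix z assume "z \<in> ents (ins y Rs)"
      then have "z = y \<or> z \<in> ents Rs" using ents_ins by auto
      then show "hd (A @ x # B) < z"
        using hdle wf_entries_gt[OF Cons.prems(1)] by (meson le_less_trans)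
    qed
    have hds: "\<forall>S\<in>set (ins y Rs). hd (A @ x # B) < hd S"
    proof
      fix S assume S: "S \<in> set (ins y Rs)"
      then have "S \<noteq> []" using IH unfolding wf_def by auto
      then have "hd S \<in> set S" by simp
      then have "hd S \<in> ents (ins y Rs)" using S unfolding ents_def by auto
      then show "hd (A @ x # B) < hd S" using gt by auto
    qed
    have disj: "set (A @ x # B) \<inter> ents (ins y Rs) = {}"
    proof -
      have "set (A @ x # B) = insert x (set R - {y})" using some(1) R(6) by auto
      moreover have "ents (ins y Rs) = insert y (ents Rs)" by (rule ents_ins)
      ultimately show ?thesis using R(5) xR yR(1) by auto
    qed
    have "distinct (A @ x # B)" using s1 by (simp add: strict_sorted_iff)
    moreover have "ins x (R # Rs) = (A @ x # B) # ins y Rs" using some by simp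
    ultimately show ?thesis using some s1 IH hds disj by (auto simp: wf_Cons)
  qed
qed

lemma wf_rsk: "distinct w \<Longrightarrow> wf (rsk w) \<and> ents (rsk w) = set w"
proof (induction w rule: rev_induct)
  case Nil then show ?case unfolding ents_def by simp
next
  case (snoc x w)
  then show ?case using wf_ins ents_ins by auto
qed


definition restrict :: "nat \<Rightarrow> nat list list \<Rightarrow> nat list list" where
  "restrict t T = filter (\<lambda>R. R \<noteq> []) (map (filter (\<lambda>y. y < t)) T)"

lemma restrict_Nil[simp]: "restrict t [] = []" unfolding restrict_def by simp

lemma restrict_Cons: "restrict t (R # Rs) =
   (if filter (\<lambda>y. y < t) R = [] then restrict t Rs else filter (\<lambda>y. y < t) R # restrict t Rs)"
  unfolding restrict_def by simp

lemma restrict_empty: "\<forall>z\<in>ents T. t \<le> z \<Longrightarrow> restrict t T = []"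
proof (induction T)
  case Nil then show ?case by simp
next
  case (Cons R Rs)
  have "\<forall>z\<in>set R. \<not> z < t"
  proof
    fix z assume "z \<in> set R"
    then have "t \<le> z" using Cons.prems by (auto simp: ents_Cons)
    then show "\<not> z < t" by simp
  qed
  then have "filter (\<lambda>y. y < t) R = []" by (simp add: filter_empty_conv)
  moreover have "restrict t Rs = []" using Cons by (auto simp: ents_Cons)
  ultimately show ?case by (simp add: restrict_Cons)
qed

lemma restrict_ge:
  assumes "wf T" "x \<notin> ents T" "t \<le> x"
  shows "restrict t (ins x T) = restrict t T"
  using assms
proof (induction T arbitrary: x)
  case Nil
  then show ?case by (simp add: restrict_Cons)
next
  case (Cons R Rs)
  have R: "wf Rs" "set R \<inter> ents Rs = {}" using Cons.prems(1) unfolding wf_Cons by auto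
  show ?case
  proof (cases rule: ins_row_cases[of x R])
    case none
    then show ?thesis using Cons.prems by (auto simp: restrict_Cons)
  next
    case (some A y B)
    have yR: "y \<notin> ents Rs" using R(2) some(1) by auto
    have "restrict t (ins y Rs) = restrict t Rs" using Cons.IH[OF R(1) yR] some Cons.prems(3) by auto
    moreover have "filter (\<lambda>z. z < t) (A @ x # B) = filter (\<lambda>z. z < t) R" using some(1) some(4) Cons.prems(3) by auto
    ultimately show ?thesis using some by (auto simp: restrict_Cons)
  qed
qed

lemma restrict_ins:
  assumes "wf T" "x \<notin> ents T" "x < t"
  shows "restrict t (ins x T) = ins x (restrict t T)"
  using assms
proof (induction T arbitrary: x)
  case Nil
  then show ?case by (simp add: restrict_Cons)
next
  case (Cons R Rs)
  have R: "R \<noteq> []" "sorted_wrt (<) R" "wf Rs" "set R \<inter> ents Rs = {}"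
    using Cons.prems(1) unfolding wf_Cons by auto
  have xR: "x \<notin> set R" "x \<notin> ents Rs" using Cons.prems(2) by (auto simp: ents_Cons)
  show ?case
  proof (cases rule: ins_row_cases[of x R])
    case none
    have all: "\<forall>z\<in>set R. z < x" using none(2) xR(1) by (metis linorder_neqE_nat)
    then have fR: "filter (\<lambda>z. z < t) R = R" using Cons.prems(3) by (intro filter_True) (auto intro: less_trans)
    have "ins_row x R = (None, R @ [x])" using none by simp
    then show ?thesis using fR R(1) Cons.prems(3) by (auto simp: restrict_Cons)
  next
    case (some A y B)
    have yR: "y \<notin> ents Rs" using R(4) some(1) by auto
    have Ax: "\<forall>a\<in>set A. a < x" using some(3) xR(1) some(1) by (metis in_set_conv_decomp linorder_neqE_nat append_Cons append_assoc)
    have By: "\<forall>b\<in>set B. y < b" using R(2) some(1) by (auto simp: sorted_wrt_append)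
    have fA: "filter (\<lambda>z. z < t) A = A" using Ax Cons.prems(3) by (intro filter_True) (auto intro: less_trans)
    show ?thesis
    proof (cases "y < t")
      case True
      have "restrict t (ins y Rs) = ins y (restrict t Rs)" using Cons.IH[OF R(3) yR True] .
      moreover have "filter (\<lambda>z. z < t) R = A @ y # filter (\<lambda>z. z < t) B"
        using some(1) fA True Cons.prems(3) by auto
      moreover have "filter (\<lambda>z. z < t) (A @ x # B) = A @ x # filter (\<lambda>z. z < t) B"
        using fA Cons.prems(3) by auto
      moreover have "ins_row x (A @ y # filter (\<lambda>z. z < t) B) = (Some y, A @ x # filter (\<lambda>z. z < t) B)"
        using ins_row_some_split some(3,4) by blast
      ultimately show ?thesis using some by (auto simp: restrict_Cons)
    next
      case False
      have r1: "restrict t (ins y Rs) = restrict t Rs" using restrict_ge[OF R(3) yR] False by auto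
      have fB: "filter (\<lambda>z. z < t) B = []" using By False by (auto simp: filter_empty_conv)
      have fR: "filter (\<lambda>z. z < t) R = A" using some(1) fA fB False Cons.prems(3) by auto
      have fR': "filter (\<lambda>z. z < t) (A @ x # B) = A @ [x]" using fA fB Cons.prems(3) by auto
      show ?thesis
      proof (cases "A = []")
        case False
        have "ins_row x A = (None, A @ [x])" using ins_row_none some(3) by auto
        then show ?thesis using some r1 fR fR' False by (auto simp: restrict_Cons)
      next
        case True
        have "hd R = y" using some(1) True by simp
        then have "\<forall>z\<in>ents Rs. t \<le> z" using wf_entries_gt[OF Cons.prems(1)] False by fastforce
        then have "restrict t Rs = []" by (rule restrict_empty)
        then show ?thesis using some r1 fR fR' True by (auto simp: restrict_Cons)
      qed
    qed
  qed
qed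

lemma restrict_rsk: "distinct w \<Longrightarrow> restrict t (rsk w) = rsk (filter (\<lambda>y. y < t) w)"
proof (induction w rule: rev_induct)
  case Nil then show ?case by simp
next
  case (snoc x w)
  have d: "distinct w" "x \<notin> set w" using snoc.prems by auto
  have wr: "wf (rsk w)" "ents (rsk w) = set w" using wf_rsk[OF d(1)] by auto
  show ?case
  proof (cases "x < t")
    case True
    then show ?thesis using restrict_ins[OF wr(1) _ True] wr d snoc.IH by auto
  next
    case False
    then show ?thesis using restrict_ge[OF wr(1)] wr d snoc.IH by auto
  qed
qed

definition add_at :: "nat \<Rightarrow> nat \<Rightarrow> nat list list \<Rightarrow> nat list list" where
  "add_at r j T = (if r < length T then T[r := T ! r @ [j]] else T @ [[j]])"

lemma add_at_0_Cons: "add_at 0 j (R # Rs) = (R @ [j]) # Rs"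
  unfolding add_at_def by simp

lemma add_at_Suc_Cons: "add_at (Suc r) j (R # Rs) = R # add_at r j Rs"
  unfolding add_at_def by auto

lemma add_at_Nil: "add_at r j [] = [[j]]"
  unfolding add_at_def by simp

lemma shape_add_at: "r \<le> length T \<Longrightarrow> shape (add_at r j T) = addc (shape T) r"
  unfolding shape_def add_at_def addc_def
  by (auto simp: fun_eq_iff nth_append nth_list_update)

lemma ins_max: "\<forall>z\<in>ents T. z < j \<Longrightarrow> ins j T = add_at 0 j T"
proof (cases T)
  case Nil then show ?thesis by (simp add: add_at_Nil)
next
  case (Cons R Rs)
  assume "\<forall>z\<in>ents T. z < j"
  then have "\<forall>z\<in>set R. \<not> j < z" using Cons by (auto simp: ents_Cons dest: less_asym)
  then show ?thesis using Cons ins_row_none by (simp add: add_at_0_Cons)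
qed

lemma ins_row_snoc_none: "\<forall>z\<in>set R. \<not> x < z \<Longrightarrow> x < j \<Longrightarrow> ins_row x (R @ [j]) = (Some j, R @ [x])"
  using ins_row_some_split[of R x j "[]"] by simp

lemma ins_row_snoc_some: "\<forall>a\<in>set A. \<not> x < a \<Longrightarrow> x < y \<Longrightarrow> ins_row x (A @ y # B @ [j]) = (Some y, A @ x # B @ [j])"
  using ins_row_some_split[of A x y "B @ [j]"] by simp

lemma ins_add_at:
  assumes "\<forall>z\<in>ents T. z < j" "x < j" "r \<le> length T"
  shows "ins x (add_at r j T) = add_at (if newrow x T = r then Suc r else r) j (ins x T)"
  using assms
proof (induction T arbitrary: x r)
  case Nil
  then show ?case by (simp add: add_at_Nil add_at_def)
next
  case (Cons R Rs)
  have jR: "\<forall>z\<in>ents Rs. z < j" using Cons.prems(1) by (auto simp: ents_Cons)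
  show ?case
  proof (cases r)
    case 0
    show ?thesis
    proof (cases rule: ins_row_cases[of x R])
      case none
      have "ins_row x (R @ [j]) = (Some j, R @ [x])" using ins_row_snoc_none[OF none(2) Cons.prems(2)] .
      then show ?thesis using 0 none ins_max[OF jR] by (simp add: add_at_0_Cons add_at_Suc_Cons)
    next
      case (some A y B)
      have "ins_row x (R @ [j]) = (Some y, A @ x # B @ [j])" using ins_row_snoc_some[OF some(3) some(4)] some(1) by simp
      then show ?thesis using 0 some by (simp add: add_at_0_Cons add_at_Suc_Cons)
    qed
  next
    case (Suc r')
    have r': "r' \<le> length Rs" using Cons.prems(3) Suc by simp
    show ?thesis
    proof (cases rule: ins_row_cases[of x R])
      case none
      then show ?thesis using Suc by (simp add: add_at_Suc_Cons)
    next
      case (some A y B)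
      have "y < j" using Cons.prems(1) some(1) by (auto simp: ents_Cons)
      then have "ins y (add_at r' j Rs) = add_at (if newrow y Rs = r' then Suc r' else r') j (ins y Rs)"
        using Cons.IH[OF jR _ r'] by auto
      then show ?thesis using Suc some by (simp add: add_at_Suc_Cons)
    qed
  qed
qed

lemma decomp_max:
  assumes "wf T" "j \<in> ents T" "\<forall>z\<in>ents T. z \<le> j"
  shows "\<exists>r\<le>length (restrict j T). T = add_at r j (restrict j T)"
  using assms
proof (induction T)
  case Nil then show ?case unfolding ents_def by simp
next
  case (Cons R Rs)
  have R: "R \<noteq> []" "sorted_wrt (<) R" "wf Rs" "\<forall>S\<in>set Rs. hd R < hd S" "set R \<inter> ents Rs = {}"
    using Cons.prems(1) unfolding wf_Cons by auto
  show ?case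
  proof (cases "j \<in> set R")
    case True
    have jRs: "j \<notin> ents Rs" using R(5) True by auto
    have lastR: "R = butlast R @ [j]"
    proof -
      have "\<forall>z\<in>set R. z \<le> j" using Cons.prems(3) by (auto simp: ents_Cons)
      have "last R = j"
      proof (rule ccontr)
        assume "last R \<noteq> j"
        obtain A B where AB: "R = A @ j # B" using True by (meson split_list)
        then have "B \<noteq> []" using \<open>last R \<noteq> j\<close> by auto
        then have "last B \<in> set B" by simp
        then have "j < last B" using R(2) AB by (auto simp: sorted_wrt_append)
        moreover have "last B \<le> j" using \<open>\<forall>z\<in>set R. z \<le> j\<close> AB \<open>last B \<in> set B\<close> by auto
        ultimately show False by simp
      qed
      then show ?thesis using R(1) by (metis append_butlast_last_id)
    qed
    have fR: "filter (\<lambda>y. y < j) R = butlast R"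
    proof -
      have "distinct R" using R(2) by (simp add: strict_sorted_iff)
      then have "j \<notin> set (butlast R)" using lastR by (metis distinct_append not_distinct_conv_prefix)
      moreover have "\<forall>z\<in>set (butlast R). z \<le> j" using Cons.prems(3) lastR by (auto simp: ents_Cons)
        (metis Un_iff in_set_butlastD)
      ultimately have "\<forall>z\<in>set (butlast R). z < j" by (auto simp: le_less)
      then have "filter (\<lambda>y. y < j) (butlast R) = butlast R" by (intro filter_True) auto
      then show ?thesis by (subst lastR) simp
    qed
    have rRs: "restrict j Rs = Rs"
    proof -
      have "\<forall>S\<in>set Rs. filter (\<lambda>y. y < j) S = S"
      proof
        fix S assume S: "S \<in> set Rs"
        have "\<forall>z\<in>set S. z < j" using Cons.prems(3) jRs S unfolding ents_def by (auto simp: ents_Cons le_less)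
        then show "filter (\<lambda>y. y < j) S = S" by auto
      qed
      moreover have "\<forall>S\<in>set Rs. S \<noteq> []" using R(3) unfolding wf_def by auto
      ultimately show ?thesis unfolding restrict_def by (induction Rs) auto
    qed
    show ?thesis
    proof (cases "butlast R = []")
      case False
      then show ?thesis using fR rRs lastR by (auto simp: restrict_Cons add_at_0_Cons intro!: exI[of _ 0])
    next
      case True
      then have Rj: "R = [j]" using lastR by simp
      have "Rs = []"
      proof (rule ccontr)
        assume "Rs \<noteq> []"
        then obtain S where S: "S \<in> set Rs" by (meson list.set_sel(1))
        then have "S \<noteq> []" using R(3) unfolding wf_def by auto
        then have "hd S \<in> set S" by simp
        then have "hd S \<in> ents Rs" using S unfolding ents_def by auto
        moreover have "j < hd S" using R(4) S Rj by auto
        moreover have "\<forall>z\<in>ents Rs. z \<le> j" using Cons.prems(3) by (auto simp: ents_Cons)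
        ultimately show False by (meson leD)
      qed
      then show ?thesis using Rj by (auto simp: restrict_Cons add_at_Nil)
    qed
  next
    case False
    have jRs: "j \<in> ents Rs" using False Cons.prems(2) by (auto simp: ents_Cons)
    obtain r where r: "r \<le> length (restrict j Rs)" "Rs = add_at r j (restrict j Rs)"
      using Cons.IH[OF R(3) jRs] Cons.prems(3) by (auto simp: ents_Cons)
    have "\<forall>z\<in>set R. z < j" using False Cons.prems(3) by (auto simp: ents_Cons le_less)
    then have fR: "filter (\<lambda>y. y < j) R = R" by auto
    show ?thesis using fR R(1) r
      by (auto simp: restrict_Cons add_at_Suc_Cons intro!: exI[of _ "Suc r"])
  qed
qed


definition word :: "(nat \<Rightarrow> nat) \<Rightarrow> nat \<Rightarrow> nat \<Rightarrow> nat list" where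
  "word p i j = map p (filter (\<lambda>k. p k < j) [0..<i])"

definition graph :: "(nat \<Rightarrow> nat) \<Rightarrow> nat \<Rightarrow> (nat \<times> nat) set" where
  "graph p n = (\<lambda>k. (k, p k)) ` {..<n}"

lemma ppm_graph: "inj_on p {..<n} \<Longrightarrow> ppm (graph p n)"
  unfolding ppm_def graph_def by (auto dest: inj_onD)

lemma word_Suc_i: "word p (Suc i) j = word p i j @ (if p i < j then [p i] else [])"
  unfolding word_def by auto

lemma word_filter: "filter (\<lambda>y. y < j) (word p i (Suc j)) = word p i j"
  unfolding word_def by (simp add: filter_map filter_filter o_def) (metis less_Suc_eq)

lemma word_no_j:
  assumes "\<not> (\<exists>k<i. p k = j)"
  shows "word p i (Suc j) = word p i j"
proof -
  have "filter (\<lambda>k. p k < Suc j) [0..<i] = filter (\<lambda>k. p k < j) [0..<i]"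
  proof (rule filter_cong)
    fix k assume "k \<in> set [0..<i]"
    then have "p k \<noteq> j" using assms by auto
    then show "(p k < Suc j) = (p k < j)" by auto
  qed simp
  then show ?thesis unfolding word_def by simp
qed

lemma word_lt: "z \<in> set (word p i j) \<Longrightarrow> z < j"
  unfolding word_def by auto

lemma word_distinct:
  assumes "inj_on p {..<n}" "i \<le> n"
  shows "distinct (word p i j)"
proof -
  have "inj_on p (set [0..<i])" using assms by (auto intro: inj_on_subset)
  then have "distinct (map p [0..<i])" by (simp add: distinct_map)
  then show ?thesis unfolding word_def by (rule distinct_map_filter)
qed

lemma length_ins_ge: "length T \<le> length (ins x T) \<and> newrow x T < length (ins x T)"
proof (induction T arbitrary: x)
  case (Cons R Rs)
  then show ?case by (cases rule: ins_row_cases[of x R]) auto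
qed simp

lemma graph_mem: "i < n \<Longrightarrow> (i, j) \<in> graph p n \<longleftrightarrow> p i = j"
  unfolding graph_def by auto

lemma grow_rsk:
  assumes inj: "inj_on p {..<n}" and "i \<le> n"
  shows "grow (graph p n) i j = shape (rsk (word p i j))"
  using assms(2)
proof (induction "i + j" arbitrary: i j rule: less_induct)
  case less
  show ?case
  proof (cases "i = 0 \<or> j = 0")
    case True
    then have "word p i j = []" unfolding word_def by auto
    then show ?thesis using True by (auto simp: shape_Nil)
  next
    case False
    then obtain i' j' where ij: "i = Suc i'" "j = Suc j'" by (meson not0_implies_Suc)
    let ?X = "graph p n"
    have i'n: "i' < n" using less.prems ij by auto
    define T where "T = rsk (word p i' j')"
    have l: "grow ?X i' j' = shape T" using less.hyps[of i' j'] ij i'n unfolding T_def by auto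
    have m: "grow ?X (Suc i') j' = shape (rsk (word p (Suc i') j'))" using less.hyps[of "Suc i'" j'] ij less.prems by auto
    have v: "grow ?X i' (Suc j') = shape (rsk (word p i' (Suc j')))" using less.hyps[of i' "Suc j'"] ij i'n by auto
    have g: "grow ?X i j = fwd (shape T) (grow ?X (Suc i') j') (grow ?X i' (Suc j')) (p i' = j')"
      using ij l graph_mem[OF i'n] by simp
    have dw: "distinct (word p i' j')" using word_distinct[OF inj] i'n by auto
    have wT: "wf T" "ents T = set (word p i' j')" using wf_rsk[OF dw] unfolding T_def by auto
    have Tlt: "\<forall>z\<in>ents T. z < j'" using wT(2) word_lt by auto
    show ?thesis
    proof (cases "p i' = j'")
      case True
      have nk: "\<not> (\<exists>k<i'. p k = j')" using True inj i'n by (auto dest: inj_onD)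
      have w1: "word p (Suc i') j' = word p i' j'" using True word_Suc_i by simp
      have w2: "word p i' (Suc j') = word p i' j'" using word_no_j[OF nk] .
      have w3: "word p i j = word p i' j' @ [j']" using ij True word_Suc_i[of p i' "Suc j'"] w2 by simp
      have "rsk (word p i j) = add_at 0 j' T" using w3 ins_max[OF Tlt] unfolding T_def by simp
      then have "shape (rsk (word p i j)) = addc (shape T) 0" using shape_add_at by auto
      then show ?thesis using g True unfolding fwd_def by simp
    next
      case False
      note pij = False
      show ?thesis
      proof (cases "p i' < j'")
        case False
        then have gt: "\<not> p i' < Suc j'" using pij by auto
        have "word p (Suc i') j' = word p i' j'" using False word_Suc_i by simp
        then have mm: "grow ?X (Suc i') j' = shape T" using m unfolding T_def by simp
        have "word p i j = word p i' (Suc j')" using ij gt word_Suc_i by simp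
        then show ?thesis using g mm v pij unfolding fwd_def by simp
      next
        case True
        have w1: "word p (Suc i') j' = word p i' j' @ [p i']" using True word_Suc_i by simp
        define s where "s = newrow (p i') T"
        have mm: "grow ?X (Suc i') j' = addc (shape T) s"
          using m w1 shape_ins unfolding T_def s_def by simp
        have w4: "word p i j = word p i' (Suc j') @ [p i']" using ij True word_Suc_i by simp
        show ?thesis
        proof (cases "\<exists>k<i'. p k = j'")
          case False
          have w2: "word p i' (Suc j') = word p i' j'" using word_no_j[OF False] .
          have vv: "grow ?X i' (Suc j') = shape T" using v w2 unfolding T_def by simp
          have "shape (rsk (word p i j)) = addc (shape T) s" using w4 w2 shape_ins unfolding T_def s_def by simp
          then show ?thesis using g mm vv pij addc_neq unfolding fwd_def by simp
        next
          case True
          then obtain k where k: "k < i'" "p k = j'" by auto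
          define T' where "T' = rsk (word p i' (Suc j'))"
          have dw': "distinct (word p i' (Suc j'))" using word_distinct[OF inj] i'n by auto
          have wT': "wf T'" "ents T' = set (word p i' (Suc j'))" using wf_rsk[OF dw'] unfolding T'_def by auto
          have jin: "j' \<in> ents T'" using wT'(2) k unfolding word_def by force
          have jmax: "\<forall>z\<in>ents T'. z \<le> j'" using wT'(2) word_lt by (metis less_Suc_eq_le)
          have rT: "restrict j' T' = T" unfolding T'_def T_def using restrict_rsk[OF dw'] word_filter by simp
          obtain r where r: "r \<le> length T" "T' = add_at r j' T" using decomp_max[OF wT'(1) jin jmax] rT by auto
          have vv: "grow ?X i' (Suc j') = addc (shape T) r" using v r shape_add_at unfolding T'_def[symmetric] by simp
          define r' where "r' = (if s = r then Suc r else r)"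
          have ia: "ins (p i') T' = add_at r' j' (ins (p i') T)"
            using ins_add_at[OF Tlt \<open>p i' < j'\<close> r(1)] r(2) unfolding r'_def s_def by simp
          have r'le: "r' \<le> length (ins (p i') T)" using length_ins_ge[of T "p i'"] r(1) unfolding r'_def s_def by auto
          have "rsk (word p i j) = ins (p i') T'" using w4 unfolding T'_def by simp
          then have "shape (rsk (word p i j)) = shape (add_at r' j' (ins (p i') T))" using ia by simp
          also have "\<dots> = addc (shape (ins (p i') T)) r'" using shape_add_at[OF r'le] .
          also have "\<dots> = addc (addc (shape T) s) r'" using shape_ins unfolding s_def by simp
          finally have "shape (rsk (word p i j)) = addc (addc (shape T) s) r'" .
          moreover have "grow ?X i j = addc (addc (shape T) s) r'"
          proof (cases "s = r")
            case True
            then show ?thesis using g mm vv pij addc_neq least_addc unfolding fwd_def r'_def by simp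
          next
            case False
            have "addc (shape T) s \<noteq> addc (shape T) r" using False addc_inj by metis
            then show ?thesis using g mm vv pij addc_neq max_addc[OF False] False unfolding fwd_def r'_def by simp
          qed
          ultimately show ?thesis by simp
        qed
      qed
    qed
  qed
qed

section \<open>Longest increasing subsequences via the growth diagram\<close>

definition has_incP :: "(nat \<times> nat) set \<Rightarrow> nat \<Rightarrow> bool" where
  "has_incP S k \<longleftrightarrow> (\<exists>C\<subseteq>S. finite C \<and> card C = k \<and> (\<forall>a\<in>C. \<forall>b\<in>C. fst a < fst b \<longrightarrow> snd a < snd b))"

lemma fwd0:
  assumes "adj l m" "adj l v"
  shows "fwd l m v False 0 = max (m 0) (v 0)"
proof -
  have "l \<le> m" "l \<le> v" using assms adj_le by auto
  then have "l 0 \<le> m 0" "l 0 \<le> v 0" by (auto simp: le_fun_def)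
  then show ?thesis unfolding fwd_def addc_def by auto
qed

lemma has_incP_empty: "has_incP {} k \<longleftrightarrow> k = 0"
  unfolding has_incP_def by auto

lemma has_incP_Un:
  assumes "\<forall>a\<in>A - B. \<forall>b\<in>B - A. fst b < fst a \<and> snd a < snd b"
  shows "has_incP (A \<union> B) k \<longleftrightarrow> has_incP A k \<or> has_incP B k"
proof
  assume "has_incP (A \<union> B) k"
  then obtain C where C: "C \<subseteq> A \<union> B" "finite C" "card C = k" "\<forall>a\<in>C. \<forall>b\<in>C. fst a < fst b \<longrightarrow> snd a < snd b"
    unfolding has_incP_def by auto
  have "C \<subseteq> A \<or> C \<subseteq> B"
  proof (rule ccontr)
    assume "\<not> (C \<subseteq> A \<or> C \<subseteq> B)"
    then obtain a b where ab: "a \<in> C" "a \<notin> B" "b \<in> C" "b \<notin> A" using C(1) by blast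
    then have "a \<in> A - B" "b \<in> B - A" using C(1) by auto
    then have ba: "fst b < fst a" "snd a < snd b" using assms by auto
    then have "snd b < snd a" using C(4) ab(1,3) by blast
    then show False using ba(2) by simp
  qed
  then show "has_incP A k \<or> has_incP B k" using C unfolding has_incP_def by blast
next
  assume "has_incP A k \<or> has_incP B k"
  then show "has_incP (A \<union> B) k" unfolding has_incP_def by blast
qed

lemma has_incP_0: "has_incP S 0"
  unfolding has_incP_def by (rule exI[of _ "{}"]) auto

lemma has_incP_down:
  assumes "has_incP S k" "k' \<le> k"
  shows "has_incP S k'"
proof -
  obtain C where C: "C \<subseteq> S" "finite C" "card C = k" "\<forall>a\<in>C. \<forall>b\<in>C. fst a < fst b \<longrightarrow> snd a < snd b"
    using assms(1) unfolding has_incP_def by auto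
  obtain C' where C': "C' \<subseteq> C" "card C' = k'" "finite C'"
    using obtain_subset_with_card_n[of k' C] assms(2) C(3) by auto
  have "\<forall>a\<in>C'. \<forall>b\<in>C'. fst a < fst b \<longrightarrow> snd a < snd b" using C(4) C'(1) by blast
  then show ?thesis unfolding has_incP_def using C' C(1) by blast
qed

lemma grow_lis:
  assumes X: "ppm X"
  shows "k \<le> grow X i j 0 \<longleftrightarrow> has_incP (X \<inter> rect i j) k"
proof (induction "i + j" arbitrary: i j k rule: less_induct)
  case less
  show ?case
  proof (cases "i = 0 \<or> j = 0")
    case True
    then have "X \<inter> rect i j = {}" unfolding rect_def by auto
    then show ?thesis using True has_incP_empty by (auto simp: emp_def)
  next
    case False
    then obtain i' j' where ij: "i = Suc i'" "j = Suc j'" by (meson not0_implies_Suc)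
    have gi: "ginv X i' j'" using grow_inv[OF X] .
    have g: "grow X i j = fwd (grow X i' j') (grow X (Suc i') j') (grow X i' (Suc j')) ((i', j') \<in> X)"
      using ij by simp
    show ?thesis
    proof (cases "(i', j') \<in> X")
      case True
      have S: "X \<inter> rect i j = insert (i', j') (X \<inter> rect i' j')"
      proof (intro set_eqI iffI)
        fix q assume q: "q \<in> X \<inter> rect i j"
        show "q \<in> insert (i', j') (X \<inter> rect i' j')"
        proof (cases "fst q = i' \<or> snd q = j'")
          case True
          then have "q = (i', j')" using X q \<open>(i', j') \<in> X\<close> unfolding ppm_def by auto
          then show ?thesis by simp
        next
          case False
          then show ?thesis using q ij unfolding rect_def by auto
        qed
      next
        fix q assume "q \<in> insert (i', j') (X \<inter> rect i' j')"
        then show "q \<in> X \<inter> rect i j" using True ij unfolding rect_def by auto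
      qed
      have val: "grow X i j 0 = Suc (grow X i' j' 0)" using g True unfolding fwd_def addc_def by simp
      have nin: "(i', j') \<notin> X \<inter> rect i' j'" unfolding rect_def by auto
      show ?thesis
      proof
        assume kle: "k \<le> grow X i j 0"
        show "has_incP (X \<inter> rect i j) k"
        proof (cases k)
          case 0 then show ?thesis by (simp add: has_incP_0)
        next
          case (Suc k')
          then have "has_incP (X \<inter> rect i' j') k'" using less.hyps[of i' j' k'] ij kle val by auto
          then obtain C where C: "C \<subseteq> X \<inter> rect i' j'" "finite C" "card C = k'"
            "\<forall>a\<in>C. \<forall>b\<in>C. fst a < fst b \<longrightarrow> snd a < snd b" unfolding has_incP_def by auto
          have "insert (i', j') C \<subseteq> X \<inter> rect i j" using C(1) S by auto
          moreover have "(i', j') \<notin> C" using C(1) nin by auto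
          then have "card (insert (i', j') C) = k" using C(2,3) Suc by simp
          moreover have "\<forall>a\<in>insert (i', j') C. \<forall>b\<in>insert (i', j') C. fst a < fst b \<longrightarrow> snd a < snd b"
            using C(1,4) unfolding rect_def by auto
          ultimately show ?thesis using C(2) unfolding has_incP_def by blast
        qed
      next
        assume "has_incP (X \<inter> rect i j) k"
        then obtain C where C: "C \<subseteq> X \<inter> rect i j" "finite C" "card C = k"
          "\<forall>a\<in>C. \<forall>b\<in>C. fst a < fst b \<longrightarrow> snd a < snd b" unfolding has_incP_def by auto
        have "C - {(i', j')} \<subseteq> X \<inter> rect i' j'" using C(1) S by auto
        moreover have "card (C - {(i', j')}) \<ge> k - 1" using C(2,3) by (simp add: card_Diff_singleton_if)
        moreover have "\<forall>a\<in>C - {(i', j')}. \<forall>b\<in>C - {(i', j')}. fst a < fst b \<longrightarrow> snd a < snd b"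
          using C(4) by blast
        moreover have "finite (C - {(i', j')})" using C(2) by simp
        ultimately have "has_incP (X \<inter> rect i' j') (card (C - {(i', j')}))"
          unfolding has_incP_def by blast
        then have "has_incP (X \<inter> rect i' j') (k - 1)"
          using has_incP_down \<open>card (C - {(i', j')}) \<ge> k - 1\<close> by blast
        then have "k - 1 \<le> grow X i' j' 0" using less.hyps[of i' j' "k - 1"] ij by auto
        then show "k \<le> grow X i j 0" using val by auto
      qed
    next
      case False
      have S: "X \<inter> rect i j = (X \<inter> rect (Suc i') j') \<union> (X \<inter> rect i' (Suc j'))"
        using False ij unfolding rect_def by (auto simp: less_Suc_eq)
      have val: "grow X i j 0 = max (grow X (Suc i') j' 0) (grow X i' (Suc j') 0)"
        using g False fwd0 gi unfolding ginv_def by auto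
      have sep: "\<forall>a\<in>X \<inter> rect (Suc i') j' - X \<inter> rect i' (Suc j'). \<forall>b\<in>X \<inter> rect i' (Suc j') - X \<inter> rect (Suc i') j'.
          fst b < fst a \<and> snd a < snd b"
        unfolding rect_def by (auto simp: less_Suc_eq)
      have "has_incP (X \<inter> rect i j) k \<longleftrightarrow> has_incP (X \<inter> rect (Suc i') j') k \<or> has_incP (X \<inter> rect i' (Suc j')) k"
        unfolding S by (rule has_incP_Un[OF sep])
      also have "\<dots> \<longleftrightarrow> k \<le> grow X (Suc i') j' 0 \<or> k \<le> grow X i' (Suc j') 0"
        using less.hyps[of "Suc i'" j'] less.hyps[of i' "Suc j'"] ij by auto
      finally show ?thesis using val by auto
    qed
  qed
qed


section \<open>Knuth equivalence and longest decreasing subsequences\<close>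

definition hasdec :: "nat list \<Rightarrow> nat \<Rightarrow> bool" where
  "hasdec w k \<longleftrightarrow> (\<exists>s. subseq s w \<and> sorted_wrt (>) s \<and> length s = k)"

definition kstep :: "nat list \<Rightarrow> nat list \<Rightarrow> bool" where
  "kstep u v \<longleftrightarrow> (\<exists>pre suf a b c. a < b \<and> b < c \<and>
     ((u = pre @ [b, c, a] @ suf \<and> v = pre @ [b, a, c] @ suf) \<or>
      (u = pre @ [a, c, b] @ suf \<and> v = pre @ [c, a, b] @ suf)))"

definition keq :: "nat list \<Rightarrow> nat list \<Rightarrow> bool" where
  "keq = (\<lambda>u v. kstep u v \<or> kstep v u)\<^sup>*\<^sup>*"

lemma keq_refl[simp]: "keq u u" unfolding keq_def by simp

lemma keq_trans: "keq u v \<Longrightarrow> keq v w \<Longrightarrow> keq u w"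
  unfolding keq_def by (rule rtranclp_trans)

lemma keq_step: "kstep u v \<Longrightarrow> keq u v"
  unfolding keq_def by auto

lemma kstep_cong: "kstep u v \<Longrightarrow> kstep (p @ u @ s) (p @ v @ s)"
  unfolding kstep_def
  apply (elim exE conjE)
  subgoal for pre suf a b c
    by (rule exI[of _ "p @ pre"], rule exI[of _ "suf @ s"], rule exI[of _ a], rule exI[of _ b], rule exI[of _ c]) auto
  done

lemma keq_cong: "keq u v \<Longrightarrow> keq (p @ u @ s) (p @ v @ s)"
  unfolding keq_def
proof (induction rule: rtranclp_induct)
  case base then show ?case by simp
next
  case (step y z)
  then have r: "(\<lambda>u v. kstep u v \<or> kstep v u) (p @ y @ s) (p @ z @ s)" using kstep_cong by blast
  show ?case by (rule rtranclp.rtrancl_into_rtrancl[OF step.IH r])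
qed

lemma keq_sym: "keq u v \<Longrightarrow> keq v u"
  unfolding keq_def
proof (induction rule: rtranclp_induct)
  case base then show ?case by simp
next
  case (step y z)
  then have r: "(\<lambda>u v. kstep u v \<or> kstep v u) z y" by blast
  show ?case by (rule converse_rtranclp_into_rtranclp[OF r step.IH])
qed

lemma subseq_Cons_cases: "subseq t (x # ys) \<Longrightarrow> subseq t ys \<or> (\<exists>t'. t = x # t' \<and> subseq t' ys)"
  by (cases t) (auto split: if_splits)

lemma subseq_Nil2: "subseq t [] \<Longrightarrow> t = []" by simp

lemma subseq3: "subseq t [x, y, z] \<Longrightarrow> t = [] \<or> t = [x] \<or> t = [y] \<or> t = [z] \<or> t = [x, y] \<or> t = [x, z] \<or> t = [y, z] \<or> t = [x, y, z]"
  by (drule subseq_Cons_cases, elim disjE exE conjE; drule subseq_Cons_cases, elim disjE exE conjE;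
      drule subseq_Cons_cases, elim disjE exE conjE) auto

lemma dec_transfer:
  assumes "\<And>t. subseq t m \<Longrightarrow> sorted_wrt (>) t \<Longrightarrow>
     \<exists>t'. subseq t' m' \<and> sorted_wrt (>) t' \<and> length t' = length t \<and> (\<forall>z\<in>set t'. \<exists>a\<in>set t. \<exists>b\<in>set t. a \<le> z \<and> z \<le> b)"
    and "hasdec (p @ m @ s) k"
  shows "hasdec (p @ m' @ s) k"
proof -
  obtain u where u: "subseq u (p @ m @ s)" "sorted_wrt (>) u" "length u = k"
    using assms(2) unfolding hasdec_def by auto
  obtain u1 u23 where u1: "u = u1 @ u23" "subseq u1 p" "subseq u23 (m @ s)"
    using u(1) by (auto elim: subseq_appendE)
  obtain u2 u3 where u2: "u23 = u2 @ u3" "subseq u2 m" "subseq u3 s"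
    using u1(3) by (auto elim: subseq_appendE)
  have so: "sorted_wrt (>) u1" "sorted_wrt (>) u2" "sorted_wrt (>) u3"
    "\<forall>x\<in>set u1. \<forall>y\<in>set u2. y < x" "\<forall>x\<in>set u1. \<forall>y\<in>set u3. y < x" "\<forall>x\<in>set u2. \<forall>y\<in>set u3. y < x"
    using u(2) unfolding u1(1) u2(1) by (auto simp: sorted_wrt_append)
  obtain t' where t': "subseq t' m'" "sorted_wrt (>) t'" "length t' = length u2"
    "\<forall>z\<in>set t'. \<exists>a\<in>set u2. \<exists>b\<in>set u2. a \<le> z \<and> z \<le> b"
    using assms(1)[OF u2(2) so(2)] by auto
  have c1: "\<forall>x\<in>set u1. \<forall>y\<in>set t'. y < x"
  proof (intro ballI)
    fix x y assume "x \<in> set u1" "y \<in> set t'"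
    then obtain b where "b \<in> set u2" "y \<le> b" using t'(4) by blast
    then show "y < x" using so(4) \<open>x \<in> set u1\<close> by (meson le_less_trans)
  qed
  have c2: "\<forall>x\<in>set t'. \<forall>y\<in>set u3. y < x"
  proof (intro ballI)
    fix x y assume "x \<in> set t'" "y \<in> set u3"
    then obtain a where "a \<in> set u2" "a \<le> x" using t'(4) by blast
    then show "y < x" using so(6) \<open>y \<in> set u3\<close> by (meson less_le_trans)
  qed
  have "sorted_wrt (>) (u1 @ t' @ u3)" using so c1 c2 t'(2) by (auto simp: sorted_wrt_append)
  moreover have "subseq (u1 @ t' @ u3) (p @ m' @ s)" using u1(2) t'(1) u2(3)
    by (intro list_emb_append_mono) auto
  moreover have "length (u1 @ t' @ u3) = k" using u(3) t'(3) u1(1) u2(1) by simp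
  ultimately show ?thesis unfolding hasdec_def by blast
qed

lemma kstep_hasdec:
  assumes "kstep u v"
  shows "hasdec u k \<longleftrightarrow> hasdec v k"
proof -
  obtain pre suf a b c where abc: "a < b" "b < c"
    "(u = pre @ [b, c, a] @ suf \<and> v = pre @ [b, a, c] @ suf) \<or> (u = pre @ [a, c, b] @ suf \<and> v = pre @ [c, a, b] @ suf)"
    using assms unfolding kstep_def by blast
  from abc(3) show ?thesis
  proof
    assume uv: "u = pre @ [b, c, a] @ suf \<and> v = pre @ [b, a, c] @ suf"
    have 1: "hasdec (pre @ [b, c, a] @ suf) k \<Longrightarrow> hasdec (pre @ [b, a, c] @ suf) k"
    proof (rule dec_transfer)
      fix t assume t: "subseq t [b, c, a]" "sorted_wrt (>) t"
      show "\<exists>t'. subseq t' [b, a, c] \<and> sorted_wrt (>) t' \<and> length t' = length t \<and> (\<forall>z\<in>set t'. \<exists>a\<in>set t. \<exists>b\<in>set t. a \<le> z \<and> z \<le> b)"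
      proof (cases "t = [c, a]")
        case True
        then show ?thesis using abc by (intro exI[of _ "[b, a]"]) auto
      next
        case False
        then show ?thesis using subseq3[OF t(1)] t(2) abc by (intro exI[of _ t]) auto
      qed
    qed
    have 2: "hasdec (pre @ [b, a, c] @ suf) k \<Longrightarrow> hasdec (pre @ [b, c, a] @ suf) k"
    proof (rule dec_transfer)
      fix t assume t: "subseq t [b, a, c]" "sorted_wrt (>) t"
      show "\<exists>t'. subseq t' [b, c, a] \<and> sorted_wrt (>) t' \<and> length t' = length t \<and> (\<forall>z\<in>set t'. \<exists>a\<in>set t. \<exists>b\<in>set t. a \<le> z \<and> z \<le> b)"
        using subseq3[OF t(1)] t(2) abc by (intro exI[of _ t]) auto
    qed
    show ?thesis using 1 2 uv by auto
  next
    assume uv: "u = pre @ [a, c, b] @ suf \<and> v = pre @ [c, a, b] @ suf"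
    have 1: "hasdec (pre @ [a, c, b] @ suf) k \<Longrightarrow> hasdec (pre @ [c, a, b] @ suf) k"
    proof (rule dec_transfer)
      fix t assume t: "subseq t [a, c, b]" "sorted_wrt (>) t"
      show "\<exists>t'. subseq t' [c, a, b] \<and> sorted_wrt (>) t' \<and> length t' = length t \<and> (\<forall>z\<in>set t'. \<exists>a\<in>set t. \<exists>b\<in>set t. a \<le> z \<and> z \<le> b)"
        using subseq3[OF t(1)] t(2) abc by (intro exI[of _ t]) auto
    qed
    have 2: "hasdec (pre @ [c, a, b] @ suf) k \<Longrightarrow> hasdec (pre @ [a, c, b] @ suf) k"
    proof (rule dec_transfer)
      fix t assume t: "subseq t [c, a, b]" "sorted_wrt (>) t"
      show "\<exists>t'. subseq t' [a, c, b] \<and> sorted_wrt (>) t' \<and> length t' = length t \<and> (\<forall>z\<in>set t'. \<exists>a\<in>set t. \<exists>b\<in>set t. a \<le> z \<and> z \<le> b)"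
      proof (cases "t = [c, a]")
        case True
        then show ?thesis using abc by (intro exI[of _ "[c, b]"]) auto
      next
        case False
        then show ?thesis using subseq3[OF t(1)] t(2) abc by (intro exI[of _ t]) auto
      qed
    qed
    show ?thesis using 1 2 uv by auto
  qed
qed

lemma keq_hasdec: "keq u v \<Longrightarrow> hasdec u k \<longleftrightarrow> hasdec v k"
  unfolding keq_def
proof (induction rule: rtranclp_induct)
  case base then show ?case by simp
next
  case (step y z)
  then show ?case using kstep_hasdec by blast
qed

definition reading :: "nat list list \<Rightarrow> nat list" where
  "reading T = concat (List.rev T)"

lemma reading_Cons: "reading (R # Rs) = reading Rs @ R"
  unfolding reading_def by simp

lemma keq_move_right:
  assumes "sorted_wrt (<) (y # B)" "x < y"
  shows "keq (y # B @ [x]) (y # x # B)"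
  using assms
proof (induction B arbitrary: y)
  case Nil then show ?case by simp
next
  case (Cons b B')
  have xb: "x < b" "y < b" using Cons.prems by auto
  have "keq (b # B' @ [x]) (b # x # B')" using Cons.IH[of b] Cons.prems xb by auto
  then have 1: "keq (y # b # B' @ [x]) (y # b # x # B')" using keq_cong[of _ _ "[y]" "[]"] by simp
  have "kstep (y # b # x # B') (y # x # b # B')"
    unfolding kstep_def using Cons.prems xb
    by (intro exI[of _ "[]"] exI[of _ B'] exI[of _ x] exI[of _ y] exI[of _ b]) auto
  then show ?case using 1 keq_step keq_trans by (metis append_Cons)
qed

lemma keq_move_left:
  assumes "sorted_wrt (<) (A @ [x])" "x < y"
  shows "keq (A @ y # x # rest) (y # A @ x # rest)"
  using assms
proof (induction A arbitrary: x rest rule: rev_induct)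
  case Nil then show ?case by simp
next
  case (snoc a A')
  have ax: "a < x" using snoc.prems(1) by (auto simp: sorted_wrt_append)
  have "kstep ([a, y, x] @ rest) ([y, a, x] @ rest)"
    unfolding kstep_def using ax snoc.prems(2)
    by (intro exI[of _ "[]"] exI[of _ rest] exI[of _ a] exI[of _ x] exI[of _ y]) auto
  then have 1: "keq (A' @ a # y # x # rest) (A' @ y # a # x # rest)"
    using keq_cong[of _ _ A' "[]"] keq_step by simp
  have "sorted_wrt (<) (A' @ [a])" using snoc.prems(1) by (auto simp: sorted_wrt_append)
  then have "keq (A' @ y # a # (x # rest)) (y # A' @ a # (x # rest))"
    using snoc.IH[of a "x # rest"] ax snoc.prems(2) by auto
  then show ?case using 1 keq_trans by simp
qed

lemma keq_row:
  assumes "sorted_wrt (<) (A @ y # B)" "\<forall>a\<in>set A. a < x" "x < y"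
  shows "keq (A @ y # B @ [x]) (y # A @ x # B)"
proof -
  have "keq (y # B @ [x]) (y # x # B)" using keq_move_right assms by (auto simp: sorted_wrt_append)
  then have 1: "keq (A @ y # B @ [x]) (A @ y # x # B)" using keq_cong[of _ _ A "[]"] by simp
  have "sorted_wrt (<) (A @ [x])" using assms by (auto simp: sorted_wrt_append)
  then have "keq (A @ y # x # B) (y # A @ x # B)" using keq_move_left assms(3) by blast
  then show ?thesis using 1 keq_trans by blast
qed

lemma keq_ins:
  assumes "wf T" "x \<notin> ents T"
  shows "keq (reading (ins x T)) (reading T @ [x])"
  using assms
proof (induction T arbitrary: x)
  case Nil then show ?case by (simp add: reading_def)
next
  case (Cons R Rs)
  have R: "sorted_wrt (<) R" "wf Rs" "set R \<inter> ents Rs = {}" using Cons.prems(1) unfolding wf_Cons by auto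
  have xR: "x \<notin> set R" using Cons.prems(2) by (auto simp: ents_Cons)
  show ?case
  proof (cases rule: ins_row_cases[of x R])
    case none
    then show ?thesis by (simp add: reading_Cons)
  next
    case (some A y B)
    have yRs: "y \<notin> ents Rs" using R(3) some(1) by auto
    have Ax: "\<forall>a\<in>set A. a < x" using some(3) xR some(1) by (metis in_set_conv_decomp linorder_neqE_nat append_Cons append_assoc)
    have "keq (reading (ins y Rs)) (reading Rs @ [y])" using Cons.IH[OF R(2) yRs] .
    from keq_cong[OF this, of "[]" "A @ x # B"]
    have 1: "keq (reading (ins y Rs) @ A @ x # B) (reading Rs @ y # A @ x # B)" by simp
    have "keq (A @ y # B @ [x]) (y # A @ x # B)" using keq_row R(1) some Ax by blast
    then have 2: "keq (reading Rs @ A @ y # B @ [x]) (reading Rs @ y # A @ x # B)"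
      using keq_cong[of _ _ "reading Rs" "[]"] by simp
    have "keq (reading Rs @ y # A @ x # B) (reading Rs @ A @ y # B @ [x])"
      using 2 by (rule keq_sym)
    then have "keq (reading (ins y Rs) @ A @ x # B) (reading Rs @ A @ y # B @ [x])" using 1 keq_trans by blast
    then show ?thesis using some by (simp add: reading_Cons)
  qed
qed

lemma keq_rsk: "distinct w \<Longrightarrow> keq (reading (rsk w)) w"
proof (induction w rule: rev_induct)
  case Nil then show ?case by (simp add: reading_def)
next
  case (snoc x w)
  have d: "distinct w" "x \<notin> set w" using snoc.prems by auto
  have wr: "wf (rsk w)" "ents (rsk w) = set w" using wf_rsk[OF d(1)] by auto
  have "keq (reading (ins x (rsk w))) (reading (rsk w) @ [x])" using keq_ins wr d by auto
  moreover have "keq (reading (rsk w) @ [x]) (w @ [x])" using keq_cong[of _ _ "[]" "[x]"] snoc.IH d by simp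
  ultimately show ?case using keq_trans by simp
qed

lemma subseq_sorted_wrt: "subseq s w \<Longrightarrow> sorted_wrt R w \<Longrightarrow> sorted_wrt R s"
proof (induction rule: list_emb.induct)
  case (list_emb_Cons xs ys y)
  then show ?case by simp
next
  case (list_emb_Cons2 x y xs ys)
  then show ?case using list_emb_set[OF list_emb_Cons2(2)] by auto
qed simp

lemma hasdec_reading_le:
  assumes "wf T" "subseq s (reading T)" "sorted_wrt (>) s"
  shows "length s \<le> length T"
  using assms
proof (induction T arbitrary: s)
  case Nil then show ?case by (simp add: reading_def)
next
  case (Cons R Rs)
  obtain s1 s2 where s: "s = s1 @ s2" "subseq s1 (reading Rs)" "subseq s2 R"
    using Cons.prems(2) unfolding reading_Cons by (auto elim: subseq_appendE)
  have "sorted_wrt (<) R" "wf Rs" using Cons.prems(1) unfolding wf_Cons by auto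
  then have inc: "sorted_wrt (<) s2" using subseq_sorted_wrt s(3) by auto
  have dec: "sorted_wrt (>) s2" "sorted_wrt (>) s1" using Cons.prems(3) s(1) by (auto simp: sorted_wrt_append)
  have "length s2 \<le> 1"
  proof (rule ccontr)
    assume "\<not> length s2 \<le> 1"
    then obtain u v r where "s2 = u # v # r" by (metis One_nat_def Suc_le_eq length_0_conv length_Cons list.exhaust not_less_zero le_less)
    then show False using inc dec by auto
  qed
  moreover have "length s1 \<le> length Rs" using Cons.IH[OF \<open>wf Rs\<close> s(2) dec(2)] .
  ultimately show ?case using s(1) by simp
qed

lemma subseq_map_hd: "\<forall>R\<in>set L. R \<noteq> [] \<Longrightarrow> subseq (map hd L) (concat L)"
proof (induction L)
  case (Cons R L)
  then obtain r R' where "R = r # R'" by (meson list.exhaust list.set_intros(1))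
  then show ?case using Cons by (auto intro: subseq_drop_many)
qed simp

lemma hasdec_reading:
  assumes "wf T"
  shows "hasdec (reading T) k \<longleftrightarrow> k \<le> length T"
proof
  assume "hasdec (reading T) k"
  then show "k \<le> length T" using hasdec_reading_le assms unfolding hasdec_def by blast
next
  assume k: "k \<le> length T"
  define s where "s = map hd (List.rev T)"
  have ss: "subseq s (reading T)" unfolding s_def reading_def
    using assms unfolding wf_def by (intro subseq_map_hd) auto
  have "sorted_wrt (\<lambda>R S. hd R < hd S) T" using assms unfolding wf_def by auto
  then have so: "sorted_wrt (>) s" unfolding s_def by (simp add: sorted_wrt_rev sorted_wrt_map)
  have "subseq (take k s) s" by (metis append_take_drop_id subseq_rev_drop_many subseq_order.order_refl)
  moreover have "sorted_wrt (>) (take k s)" using so by (rule sorted_wrt_take)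
  moreover have "length (take k s) = k" using k unfolding s_def by simp
  ultimately show "hasdec (reading T) k" unfolding hasdec_def using ss by (meson subseq_order.order_trans)
qed

theorem hasdec_rsk: "distinct w \<Longrightarrow> hasdec w k \<longleftrightarrow> k \<le> length (rsk w)"
  using keq_hasdec[OF keq_rsk] hasdec_reading wf_rsk by blast


section \<open>Translating the pattern conditions\<close>

lemma chain_lt:
  assumes "\<And>j. Suc j < K \<Longrightarrow> f j < f (Suc j)" "a < b" "b < K"
  shows "(f a :: nat) < f b"
  using assms(2,3)
proof (induction b)
  case 0 then show ?case by simp
next
  case (Suc b)
  show ?case
  proof (cases "a = b")
    case True then show ?thesis using assms(1) Suc.prems by simp
  next
    case False
    then have "f a < f b" using Suc by auto
    also have "f b < f (Suc b)" using assms(1) Suc.prems by simp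
    finally show ?thesis .
  qed
qed

lemma chain_gt:
  assumes "\<And>j. Suc j < K \<Longrightarrow> f (Suc j) < f j" "a < b" "b < K"
  shows "(f b :: nat) < f a"
  using assms(2,3)
proof (induction b)
  case 0 then show ?case by simp
next
  case (Suc b)
  show ?case
  proof (cases "a = b")
    case True then show ?thesis using assms(1) Suc.prems by simp
  next
    case False
    then have "f b < f a" using Suc by auto
    moreover have "f (Suc b) < f b" using assms(1) Suc.prems by simp
    ultimately show ?thesis by simp
  qed
qed

lemma graph_pt: "q \<in> graph p n \<Longrightarrow> q = (fst q, p (fst q)) \<and> fst q < n"
  unfolding graph_def by auto

lemma incr_conv:
  assumes "L \<ge> 1"
  shows "contains_incr n p (L + 1) \<longleftrightarrow> (\<exists>k<n. has_incP (graph p n \<inter> rect k (p k)) L)"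
proof
  assume "contains_incr n p (L + 1)"
  then obtain f where f: "\<forall>j<L + 1. f j < n" "\<forall>j. Suc j < L + 1 \<longrightarrow> f j < f (Suc j) \<and> p (f j) < p (f (Suc j))"
    unfolding contains_incr_def by blast
  have m1: "\<And>a b. a < b \<Longrightarrow> b < L + 1 \<Longrightarrow> f a < f b" using chain_lt[of "L + 1" f] f(2) by blast
  have m2: "\<And>a b. a < b \<Longrightarrow> b < L + 1 \<Longrightarrow> p (f a) < p (f b)" using chain_lt[of "L + 1" "p \<circ> f"] f(2) by auto
  define C where "C = (\<lambda>j. (f j, p (f j))) ` {..<L}"
  have inj: "inj_on (\<lambda>j. (f j, p (f j))) {..<L}"
  proof (rule inj_onI)
    fix a b assume "a \<in> {..<L}" "b \<in> {..<L}" "(f a, p (f a)) = (f b, p (f b))"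
    then show "a = b" using m1 by (metis Pair_inject add.commute less_SucI linorder_neqE_nat lessThan_iff less_irrefl plus_1_eq_Suc)
  qed
  have "C \<subseteq> graph p n \<inter> rect (f L) (p (f L))"
    unfolding C_def graph_def rect_def using f(1) m1 m2 by auto
  moreover have "card C = L" unfolding C_def using card_image[OF inj] by simp
  moreover have "\<forall>a\<in>C. \<forall>b\<in>C. fst a < fst b \<longrightarrow> snd a < snd b"
  proof (intro ballI impI)
    fix a b assume ab: "a \<in> C" "b \<in> C" "fst a < fst b"
    then obtain i j where ij: "i < L" "j < L" "a = (f i, p (f i))" "b = (f j, p (f j))" unfolding C_def by auto
    have "i < j"
    proof (rule ccontr)
      assume "\<not> i < j"
      then have "j \<le> i" by simp
      then have "f j \<le> f i" using m1[of j i] ij by (cases "j = i") auto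
      then show False using ab(3) ij by simp
    qed
    then show "snd a < snd b" using m2 ij by auto
  qed
  moreover have "finite C" unfolding C_def by simp
  ultimately show "\<exists>k<n. has_incP (graph p n \<inter> rect k (p k)) L"
    using f(1) unfolding has_incP_def by (intro exI[of _ "f L"]) auto
next
  assume "\<exists>k<n. has_incP (graph p n \<inter> rect k (p k)) L"
  then obtain k C where k: "k < n" "C \<subseteq> graph p n \<inter> rect k (p k)" "finite C" "card C = L"
    "\<forall>a\<in>C. \<forall>b\<in>C. fst a < fst b \<longrightarrow> snd a < snd b"
    unfolding has_incP_def by auto
  define K where "K = fst ` C"
  have injf: "inj_on fst C" using k(2) graph_pt by (intro inj_onI) (metis IntE subsetD)
  have cK: "card K = L" unfolding K_def using card_image[OF injf] k(4) by simp
  have fK: "finite K" unfolding K_def using k(3) by simp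
  have memK: "\<And>a. a \<in> K \<Longrightarrow> (a, p a) \<in> C \<and> a < k \<and> p a < p k"
  proof -
    fix a assume "a \<in> K"
    then obtain q where q: "q \<in> C" "a = fst q" unfolding K_def by auto
    then have "q = (a, p a)" using k(2) graph_pt by blast
    then show "(a, p a) \<in> C \<and> a < k \<and> p a < p k" using q k(2) unfolding rect_def by auto
  qed
  define ks where "ks = sorted_list_of_set K"
  have ks: "length ks = L" "set ks = K" "sorted_wrt (<) ks"
    unfolding ks_def using cK fK by (auto simp: sorted_list_of_set.strict_sorted_key_list_of_set)
  define f where "f j = (if j < L then ks ! j else k)" for j
  have "\<forall>j<L + 1. f j < n"
  proof (intro allI impI)
    fix j assume "j < L + 1"
    show "f j < n"
    proof (cases "j < L")
      case True
      then have "ks ! j \<in> K" using ks by (metis nth_mem)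
      then show ?thesis using memK k(1) unfolding f_def using True by fastforce
    qed (use k(1) f_def in auto)
  qed
  moreover have "\<forall>j. Suc j < L + 1 \<longrightarrow> f j < f (Suc j) \<and> p (f j) < p (f (Suc j))"
  proof (intro allI impI)
    fix j assume j: "Suc j < L + 1"
    have jK: "ks ! j \<in> K" using ks j by (metis Suc_eq_plus1 Suc_less_SucD nth_mem)
    show "f j < f (Suc j) \<and> p (f j) < p (f (Suc j))"
    proof (cases "Suc j < L")
      case True
      have lt: "ks ! j < ks ! Suc j" using ks True by (simp add: sorted_wrt_nth_less)
      have jK': "ks ! Suc j \<in> K" using ks True by (metis nth_mem)
      have "p (ks ! j) < p (ks ! Suc j)" using k(5) memK[OF jK] memK[OF jK'] lt by fastforce
      then show ?thesis using lt True unfolding f_def by auto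
    next
      case False
      then have "Suc j = L" using j by simp
      then show ?thesis using memK[OF jK] unfolding f_def by auto
    qed
  qed
  ultimately show "contains_incr n p (L + 1)" unfolding contains_incr_def by blast
qed

lemma subseq_sorted_sub:
  assumes "sorted_wrt (<) (ys :: nat list)" "set ys \<subseteq> set xs" "sorted_wrt (<) xs"
  shows "subseq ys xs"
proof -
  have "filter (\<lambda>z. z \<in> set ys) xs = ys"
  proof (rule sorted_distinct_set_unique)
    have "sorted_wrt (<) (filter (\<lambda>z. z \<in> set ys) xs)" by (rule sorted_wrt_filter[OF assms(3)])
    then show "sorted (filter (\<lambda>z. z \<in> set ys) xs)" "distinct (filter (\<lambda>z. z \<in> set ys) xs)"
      by (auto simp: strict_sorted_iff)
    show "sorted ys" "distinct ys" using assms(1) by (auto simp: strict_sorted_iff)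
    show "set (filter (\<lambda>z. z \<in> set ys) xs) = set ys" using assms(2) by auto
  qed
  then show ?thesis by (metis subseq_filter_left)
qed

lemma dec_conv:
  assumes "d \<ge> 1"
  shows "contains_dec_pat n p d \<longleftrightarrow> (\<exists>k<n. hasdec (word p k (p k)) d)"
proof
  assume "contains_dec_pat n p d"
  then obtain f where f: "\<forall>j\<le>d. f j < n" "\<forall>j. Suc j \<le> d \<longrightarrow> f j < f (Suc j)"
    "\<forall>j. Suc j < d \<longrightarrow> p (f (Suc j)) < p (f j)" "p (f 0) < p (f d)"
    unfolding contains_dec_pat_def by blast
  have m1: "\<And>a b. a < b \<Longrightarrow> b < d + 1 \<Longrightarrow> f a < f b" using chain_lt[of "d + 1" f] f(2) by auto
  have m2: "\<And>a b. a < b \<Longrightarrow> b < d \<Longrightarrow> p (f b) < p (f a)" using chain_gt[of d "p \<circ> f"] f(3) by auto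
  define ks where "ks = map f [0..<d]"
  have sks: "sorted_wrt (<) ks" unfolding ks_def sorted_wrt_map
    by (rule sorted_wrt_mono_rel[of _ "(<)"]) (auto intro: m1 simp: sorted_wrt_upt)
  have pf: "\<And>j. j < d \<Longrightarrow> p (f j) < p (f d)"
  proof -
    fix j assume "j < d"
    then have "p (f j) \<le> p (f 0)" using m2[of 0 j] by (cases j) auto
    then show "p (f j) < p (f d)" using f(4) by simp
  qed
  have sub: "set ks \<subseteq> set (filter (\<lambda>k. p k < p (f d)) [0..<f d])"
    unfolding ks_def using m1 pf by auto
  have "subseq ks (filter (\<lambda>k. p k < p (f d)) [0..<f d])"
    using subseq_sorted_sub[OF sks sub] by (simp add: sorted_wrt_filter)
  then have "subseq (map p ks) (word p (f d) (p (f d)))" unfolding word_def by (rule subseq_map)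
  moreover have "sorted_wrt (>) (map p ks)" unfolding ks_def sorted_wrt_map
    by (rule sorted_wrt_mono_rel[of _ "(<)"]) (auto intro: m2 simp: sorted_wrt_upt)
  moreover have "length (map p ks) = d" unfolding ks_def by simp
  ultimately show "\<exists>k<n. hasdec (word p k (p k)) d" using f(1) unfolding hasdec_def by (intro exI[of _ "f d"]) auto
next
  assume "\<exists>k<n. hasdec (word p k (p k)) d"
  then obtain k s where k: "k < n" "subseq s (word p k (p k))" "sorted_wrt (>) s" "length s = d"
    unfolding hasdec_def by auto
  obtain N where N: "s = nths (word p k (p k)) N" using k(2) subseq_conv_nths by auto
  define ks where "ks = nths (filter (\<lambda>k'. p k' < p k) [0..<k]) N"
  have sN: "s = map p ks" unfolding N ks_def word_def by (simp add: nths_map)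
  have subks: "subseq ks (filter (\<lambda>k'. p k' < p k) [0..<k])" unfolding ks_def subseq_conv_nths by blast
  have sks: "sorted_wrt (<) ks" using subseq_sorted_wrt[OF subks] by (simp add: sorted_wrt_filter)
  have "set ks \<subseteq> set (filter (\<lambda>k'. p k' < p k) [0..<k])" unfolding ks_def by (rule set_nths_subset)
  then have inks: "\<And>a. a \<in> set ks \<Longrightarrow> a < k \<and> p a < p k" by auto
  have lks: "length ks = d" using sN k(4) by simp
  define f where "f j = (if j < d then ks ! j else k)" for j
  have "\<forall>j\<le>d. f j < n"
  proof (intro allI impI)
    fix j assume "j \<le> d"
    show "f j < n"
    proof (cases "j < d")
      case True
      then have "ks ! j \<in> set ks" using lks by simp
      then have "ks ! j < k" using inks by blast
      then show ?thesis using k(1) True unfolding f_def by simp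
    qed (use k(1) f_def in auto)
  qed
  moreover have "\<forall>j. Suc j \<le> d \<longrightarrow> f j < f (Suc j)"
  proof (intro allI impI)
    fix j assume j: "Suc j \<le> d"
    show "f j < f (Suc j)"
    proof (cases "Suc j < d")
      case True then show ?thesis using sks lks unfolding f_def by (simp add: sorted_wrt_nth_less)
    next
      case False
      then have "j < d" "Suc j = d" using j by auto
      then have "ks ! j \<in> set ks" using lks by simp
      then have "ks ! j < k" using inks by blast
      then show ?thesis using \<open>j < d\<close> \<open>Suc j = d\<close> unfolding f_def by simp
    qed
  qed
  moreover have "\<forall>j. Suc j < d \<longrightarrow> p (f (Suc j)) < p (f j)"
  proof (intro allI impI)
    fix j assume j: "Suc j < d"
    have so: "sorted_wrt (>) (map p ks)" using k(3) sN by simp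
    have "map p ks ! Suc j < map p ks ! j" by (rule sorted_wrt_nth_less[OF so]) (use j lks in auto)
    then show "p (f (Suc j)) < p (f j)" using j lks unfolding f_def by simp
  qed
  moreover have "p (f 0) < p (f d)"
  proof -
    have "ks ! 0 \<in> set ks" using lks assms by (metis nth_mem not_one_le_zero neq0_conv)
    then show ?thesis using inks lks assms unfolding f_def by auto
  qed
  ultimately show "contains_dec_pat n p d" unfolding contains_dec_pat_def by blast
qed


section \<open>Permutations and their Ferrers boards\<close>

definition Dp :: "(nat \<Rightarrow> nat) \<Rightarrow> nat \<Rightarrow> (nat \<times> nat) set" where
  "Dp p n = {(i, v). \<exists>k<n. i < k \<and> v < p k}"

definition Xp :: "(nat \<Rightarrow> nat) \<Rightarrow> nat \<Rightarrow> (nat \<times> nat) set" where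
  "Xp p n = graph p n \<inter> Dp p n"

lemma perm_facts:
  fixes p :: "nat \<Rightarrow> nat"
  assumes "p permutes {0..<n}"
  shows "inj_on p {..<n}" "\<And>k. k < n \<Longrightarrow> p k < n" "\<And>k. n \<le> k \<Longrightarrow> p k = k"
proof -
  show "inj_on p {..<n}" by (rule permutes_inj_on[OF assms])
  show "\<And>k. k < n \<Longrightarrow> p k < n"
  proof -
    fix k assume "k < n"
    then have "k \<in> {0..<n}" by simp
    then have "p k \<in> {0..<n}" by (simp only: permutes_in_image[OF assms])
    then show "p k < n" by simp
  qed
  show "\<And>k. n \<le> k \<Longrightarrow> p k = k"
  proof -
    fix k assume "n \<le> k"
    then have "k \<notin> {0..<n}" by simp
    then show "p k = k" by (rule permutes_not_in[OF assms])
  qed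
qed

lemma Dp_sub: "p permutes {0..<n} \<Longrightarrow> Dp p n \<subseteq> {..<n} \<times> {..<n}"
  unfolding Dp_def using perm_facts(2) by (auto intro: less_trans)

lemma Dp_finite: "p permutes {0..<n} \<Longrightarrow> finite (Dp p n)"
  using Dp_sub by (meson finite_SigmaI finite_lessThan finite_subset)

lemma Dp_downset: "downset (Dp p n)"
  unfolding downset_def Dp_def by (auto intro: le_less_trans)

lemma Xp_sub: "Xp p n \<subseteq> Dp p n" unfolding Xp_def by auto

lemma ppm_Xp: "p permutes {0..<n} \<Longrightarrow> ppm (Xp p n)"
  using ppm_graph[OF perm_facts(1)] unfolding Xp_def ppm_def by auto

lemma bd_rect:
  assumes "downset D" "c \<in> bd D"
  shows "rect (fst c) (snd c) \<subseteq> D"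
proof
  fix q assume q: "q \<in> rect (fst c) (snd c)"
  obtain x y where c: "c = (x, y)" by (cases c)
  then have "x \<noteq> 0" "y \<noteq> 0" using q unfolding rect_def by auto
  then have "(x - 1, y - 1) \<in> D" using assms(2) c unfolding bd_def by auto
  moreover have "fst q \<le> x - 1" "snd q \<le> y - 1" using q c unfolding rect_def by auto
  ultimately show "q \<in> D" using assms(1) unfolding downset_def by (metis prod.collapse)
qed

lemma grow_graph_bd:
  assumes "c \<in> bd (Dp p n)"
  shows "grow (graph p n) (fst c) (snd c) = gv (Xp p n) c"
proof -
  have "rect (fst c) (snd c) \<subseteq> Dp p n" using bd_rect[OF Dp_downset assms] .
  then have "graph p n \<inter> rect (fst c) (snd c) = Xp p n \<inter> rect (fst c) (snd c)" unfolding Xp_def by auto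
  then show ?thesis unfolding gv_def by (rule grow_local)
qed

lemma conj_shape: "wf T \<Longrightarrow> conj (shape T) 0 = length T"
proof -
  assume "wf T"
  then have "{r. 0 < shape T r} = {..<length T}" unfolding shape_def wf_def by (auto simp: in_set_conv_nth)
  then show ?thesis unfolding conj_def by simp
qed

lemma class_points:
  assumes p: "p permutes {0..<n}" and d: "d \<ge> 1" and L: "L \<ge> 1"
  shows "p \<in> Sdl n d L \<longleftrightarrow> (\<forall>k<n. boxd d L (grow (graph p n) k (p k)))"
proof -
  have inj: "inj_on p {..<n}" using perm_facts[OF p] by simp
  have G: "ppm (graph p n)" using ppm_graph[OF inj] .
  have a0: "\<And>k. grow (graph p n) k (p k) 0 < L \<longleftrightarrow> \<not> has_incP (graph p n \<inter> rect k (p k)) L"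
    using grow_lis[OF G, of L] by (simp add: not_le[symmetric])
  have a: "\<not> contains_incr n p (L + 1) \<longleftrightarrow> (\<forall>k<n. grow (graph p n) k (p k) 0 < L)"
    unfolding a0 using incr_conv[OF L, of n p] by blast
  have b: "conj (grow (graph p n) k (p k)) 0 = length (rsk (word p k (p k)))" if "k < n" for k
  proof -
    have "distinct (word p k (p k))" using word_distinct[OF inj] that by simp
    then show ?thesis using grow_rsk[OF inj, of k] that conj_shape wf_rsk by auto
  qed
  have c: "\<not> contains_dec_pat n p d \<longleftrightarrow> (\<forall>k<n. conj (grow (graph p n) k (p k)) 0 < d)"
  proof -
    have "\<not> contains_dec_pat n p d \<longleftrightarrow> (\<forall>k<n. \<not> hasdec (word p k (p k)) d)" using dec_conv[OF d] by auto
    also have "\<dots> \<longleftrightarrow> (\<forall>k<n. conj (grow (graph p n) k (p k)) 0 < d)"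
    proof -
      have "\<And>k. k < n \<Longrightarrow> hasdec (word p k (p k)) d \<longleftrightarrow> d \<le> conj (grow (graph p n) k (p k)) 0"
        using b hasdec_rsk word_distinct[OF inj] by simp
      then show ?thesis by (auto simp: not_le)
    qed
    finally show ?thesis .
  qed
  show ?thesis unfolding Sdl_def boxd_def using a c p by auto
qed

lemma class_bd:
  assumes p: "p permutes {0..<n}" and d: "d \<ge> 1" and L: "L \<ge> 1"
  shows "p \<in> Sdl n d L \<longleftrightarrow> (\<forall>c\<in>bd (Dp p n). boxd d L (gv (Xp p n) c))"
proof -
  have inj: "inj_on p {..<n}" using perm_facts[OF p] by simp
  have G: "ppm (graph p n)" using ppm_graph[OF inj] .
  have "(\<forall>k<n. boxd d L (grow (graph p n) k (p k))) \<longleftrightarrow> (\<forall>c\<in>bd (Dp p n). boxd d L (grow (graph p n) (fst c) (snd c)))"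
  proof
    assume A: "\<forall>k<n. boxd d L (grow (graph p n) k (p k))"
    show "\<forall>c\<in>bd (Dp p n). boxd d L (grow (graph p n) (fst c) (snd c))"
    proof
      fix c assume c: "c \<in> bd (Dp p n)"
      obtain x y where xy: "c = (x, y)" by (cases c)
      show "boxd d L (grow (graph p n) (fst c) (snd c))"
      proof (cases "x = 0 \<or> y = 0")
        case True
        then have "grow (graph p n) x y = emp" by (metis grow.simps(1) grow_0_right)
        moreover have "boxd d L emp" using d L unfolding boxd_def conj_emp by (simp add: emp_def)
        ultimately show ?thesis using xy by simp
      next
        case False
        then have "(x - 1, y - 1) \<in> Dp p n" using c xy unfolding bd_def by auto
        then obtain k where k: "k < n" "x - 1 < k" "y - 1 < p k" unfolding Dp_def by auto
        then have "grow (graph p n) x y \<le> grow (graph p n) k (p k)" using grow_mono[OF G] False by auto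
        then show ?thesis using A k xy boxd_mono grow_ptn[OF G] by auto
      qed
    qed
  next
    assume B: "\<forall>c\<in>bd (Dp p n). boxd d L (grow (graph p n) (fst c) (snd c))"
    show "\<forall>k<n. boxd d L (grow (graph p n) k (p k))"
    proof (intro allI impI)
      fix k assume k: "k < n"
      define M where "M = Max (p ` {k..<n})"
      have fin: "finite (p ` {k..<n})" "p ` {k..<n} \<noteq> {}" using k by auto
      have M: "M \<in> p ` {k..<n}" "\<And>k'. k' \<in> {k..<n} \<Longrightarrow> p k' \<le> M" unfolding M_def using fin by auto
      then obtain km where km: "km \<in> {k..<n}" "p km = M" by auto
      have "(k, M) \<in> bd (Dp p n)"
      proof -
        have "(k, M) \<notin> Dp p n"
        proof
          assume "(k, M) \<in> Dp p n"
          then obtain k' where k': "k' < n" "k < k'" "M < p k'" unfolding Dp_def by auto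
          then have "p k' \<le> M" using M(2) by auto
          then show False using k'(3) by simp
        qed
        moreover have "k = 0 \<or> M = 0 \<or> (k - 1, M - 1) \<in> Dp p n"
          using km unfolding Dp_def by auto
        ultimately show ?thesis unfolding bd_def by auto
      qed
      then have "boxd d L (grow (graph p n) k M)" using B by force
      moreover have "grow (graph p n) k (p k) \<le> grow (graph p n) k M" using grow_mono[OF G] M(2) k by auto
      ultimately show "boxd d L (grow (graph p n) k (p k))" using boxd_mono grow_ptn[OF G] by blast
    qed
  qed
  then show ?thesis using class_points[OF p d L] grow_graph_bd by auto
qed


definition hcol :: "(nat \<times> nat) set \<Rightarrow> nat \<Rightarrow> nat" where
  "hcol D k = (LEAST y. (k, y) \<notin> D)"

definition hrow :: "(nat \<times> nat) set \<Rightarrow> nat \<Rightarrow> nat" where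
  "hrow D y = (LEAST x. (x, y) \<notin> D)"

lemma col_bd:
  assumes fD: "finite D" and dD: "downset D"
  shows "(k, hcol D k) \<in> bd D" "(Suc k, hcol D k) \<in> bd D" "\<And>y. (k, y) \<in> D \<longleftrightarrow> y < hcol D k"
proof -
  have "finite {y. (k, y) \<in> D}" using fD by (rule finite_subset[rotated, OF finite_imageI[of D snd]]) force
  then obtain y0 where "y0 \<notin> {y. (k, y) \<in> D}" using ex_new_if_finite infinite_UNIV_nat by blast
  then have ex: "\<exists>y. (k, y) \<notin> D" by auto
  have hn: "(k, hcol D k) \<notin> D" unfolding hcol_def by (rule LeastI_ex[OF ex])
  show ch: "\<And>y. (k, y) \<in> D \<longleftrightarrow> y < hcol D k"
  proof
    fix y assume "(k, y) \<in> D"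
    show "y < hcol D k"
    proof (rule ccontr)
      assume "\<not> y < hcol D k"
      then have "(k, hcol D k) \<in> D" using dD \<open>(k, y) \<in> D\<close> unfolding downset_def by (meson le_refl not_less)
      then show False using hn by simp
    qed
  next
    fix y assume "y < hcol D k"
    then show "(k, y) \<in> D" unfolding hcol_def using not_less_Least by blast
  qed
  have a: "hcol D k = 0 \<or> (k, hcol D k - 1) \<in> D"
  proof (cases "hcol D k = 0")
    case False
    then have "hcol D k - 1 < hcol D k" by simp
    then show ?thesis using ch by blast
  qed simp
  show "(k, hcol D k) \<in> bd D"
  proof -
    have "k = 0 \<or> hcol D k = 0 \<or> (k - 1, hcol D k - 1) \<in> D"
      using a dD unfolding downset_def by (meson diff_le_self le_refl)
    then show ?thesis using hn unfolding bd_def by auto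
  qed
  show "(Suc k, hcol D k) \<in> bd D"
  proof -
    have "(Suc k, hcol D k) \<notin> D" using hn dD unfolding downset_def by (meson le_refl le_Suc_eq)
    then show ?thesis using a unfolding bd_def by auto
  qed
qed

lemma row_bd:
  assumes fD: "finite D" and dD: "downset D"
  shows "(hrow D y, y) \<in> bd D" "(hrow D y, Suc y) \<in> bd D" "\<And>x. (x, y) \<in> D \<longleftrightarrow> x < hrow D y"
proof -
  have "finite {x. (x, y) \<in> D}" using fD by (rule finite_subset[rotated, OF finite_imageI[of D fst]]) force
  then obtain x0 where "x0 \<notin> {x. (x, y) \<in> D}" using ex_new_if_finite infinite_UNIV_nat by blast
  then have ex: "\<exists>x. (x, y) \<notin> D" by auto
  have hn: "(hrow D y, y) \<notin> D" unfolding hrow_def by (rule LeastI_ex[OF ex])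
  show ch: "\<And>x. (x, y) \<in> D \<longleftrightarrow> x < hrow D y"
  proof
    fix x assume "(x, y) \<in> D"
    show "x < hrow D y"
    proof (rule ccontr)
      assume "\<not> x < hrow D y"
      then have "(hrow D y, y) \<in> D" using dD \<open>(x, y) \<in> D\<close> unfolding downset_def by (meson le_refl not_less)
      then show False using hn by simp
    qed
  next
    fix x assume "x < hrow D y"
    then show "(x, y) \<in> D" unfolding hrow_def using not_less_Least by blast
  qed
  have a: "hrow D y = 0 \<or> (hrow D y - 1, y) \<in> D"
  proof (cases "hrow D y = 0")
    case False
    then have "hrow D y - 1 < hrow D y" by simp
    then show ?thesis using ch by blast
  qed simp
  show "(hrow D y, y) \<in> bd D"
  proof -
    have "hrow D y = 0 \<or> y = 0 \<or> (hrow D y - 1, y - 1) \<in> D"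
      using a dD unfolding downset_def by (meson diff_le_self le_refl)
    then show ?thesis using hn unfolding bd_def by auto
  qed
  show "(hrow D y, Suc y) \<in> bd D"
  proof -
    have "(hrow D y, Suc y) \<notin> D" using hn dD unfolding downset_def by (meson le_refl le_Suc_eq)
    then show ?thesis using a unfolding bd_def by auto
  qed
qed

lemma colpt:
  assumes "finite D" "downset D" "ppm Y" "Y \<subseteq> D"
  shows "(\<exists>y. (k, y) \<in> Y) \<longleftrightarrow> gv Y (Suc k, hcol D k) \<noteq> gv Y (k, hcol D k)"
proof -
  have "gv Y (Suc k, hcol D k) \<noteq> gv Y (k, hcol D k) \<longleftrightarrow> (\<exists>y<hcol D k. (k, y) \<in> Y)"
    using grow_inv[OF assms(3), of k "hcol D k"] unfolding ginv_def gv_def by simp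
  moreover have "\<And>y. (k, y) \<in> Y \<Longrightarrow> y < hcol D k" using col_bd(3)[OF assms(1,2)] assms(4) by blast
  ultimately show ?thesis by blast
qed

lemma rowpt:
  assumes "finite D" "downset D" "ppm Y" "Y \<subseteq> D"
  shows "(\<exists>x. (x, y) \<in> Y) \<longleftrightarrow> gv Y (hrow D y, Suc y) \<noteq> gv Y (hrow D y, y)"
proof -
  have "gv Y (hrow D y, Suc y) \<noteq> gv Y (hrow D y, y) \<longleftrightarrow> (\<exists>x<hrow D y. (x, y) \<in> Y)"
    using grow_inv[OF assms(3), of "hrow D y" y] unfolding ginv_def gv_def by simp
  moreover have "\<And>x. (x, y) \<in> Y \<Longrightarrow> x < hrow D y" using row_bd(3)[OF assms(1,2)] assms(4) by blast
  ultimately show ?thesis by blast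
qed

lemma ppmD: "ppm X \<Longrightarrow> a \<in> X \<Longrightarrow> b \<in> X \<Longrightarrow> fst a = fst b \<or> snd a = snd b \<Longrightarrow> a = b"
  unfolding ppm_def by blast

lemma construct:
  fixes p :: "nat \<Rightarrow> nat"
  assumes p: "p permutes {0..<n}"
  shows "\<exists>q. q permutes {0..<n} \<and> Dp q n = Dp p n \<and> (\<forall>c\<in>bd (Dp p n). gv (Xp q n) c = conj (gv (Xp p n) c))
    \<and> (\<forall>k. (k, p k) \<notin> Dp p n \<longrightarrow> q k = p k) \<and> (p \<circ> p = id \<longrightarrow> q \<circ> q = id)"
proof -
  define D where "D = Dp p n"
  define X where "X = Xp p n"
  have fD: "finite D" unfolding D_def using Dp_finite[OF p] .
  have dD: "downset D" unfolding D_def by (rule Dp_downset)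
  have XD: "X \<subseteq> D" unfolding X_def D_def by (rule Xp_sub)
  have pX: "ppm X" unfolding X_def using ppm_Xp[OF p] .
  have pf: "inj_on p {..<n}" "\<And>k. k < n \<Longrightarrow> p k < n" "\<And>k. n \<le> k \<Longrightarrow> p k = k" using perm_facts[OF p] by auto
  have DS: "D \<subseteq> {..<n} \<times> {..<n}" unfolding D_def using Dp_sub[OF p] .
  have val: "valid D (conj \<circ> gv X)" using valid_conj[OF valid_grow[OF pX]] .
  obtain X' where X': "X' \<subseteq> D" "ppm X'" "\<forall>c\<in>bd D. gv X' c = conj (gv X c)"
    using board_exists[OF fD dD val] by auto
  have tr: "\<And>c1 c2. c1 \<in> bd D \<Longrightarrow> c2 \<in> bd D \<Longrightarrow> (gv X' c1 \<noteq> gv X' c2 \<longleftrightarrow> gv X c1 \<noteq> gv X c2)"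
  proof -
    fix c1 c2 assume c: "c1 \<in> bd D" "c2 \<in> bd D"
    have pp: "ptn (gv X c1)" "ptn (gv X c2)" using grow_ptn[OF pX] unfolding gv_def by auto
    show "gv X' c1 \<noteq> gv X' c2 \<longleftrightarrow> gv X c1 \<noteq> gv X c2"
      using X'(3) c conj_inj[OF pp] by auto
  qed
  have colsame: "\<And>k. (\<exists>y. (k, y) \<in> X') \<longleftrightarrow> (\<exists>y. (k, y) \<in> X)"
    using colpt[OF fD dD X'(2) X'(1)] colpt[OF fD dD pX XD] tr col_bd[OF fD dD] by metis
  have rowsame: "\<And>y. (\<exists>x. (x, y) \<in> X') \<longleftrightarrow> (\<exists>x. (x, y) \<in> X)"
    using rowpt[OF fD dD X'(2) X'(1)] rowpt[OF fD dD pX XD] tr row_bd[OF fD dD] by metis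
  have Xg: "\<And>a b. (a, b) \<in> X \<longleftrightarrow> a < n \<and> b = p a \<and> (a, b) \<in> D"
    unfolding X_def Xp_def graph_def D_def by auto
  have colX: "\<And>k. (\<exists>y. (k, y) \<in> X) \<longleftrightarrow> k < n \<and> (k, p k) \<in> D" using Xg by auto
  have rowX: "\<And>y. (\<exists>x. (x, y) \<in> X) \<longleftrightarrow> (\<exists>x<n. p x = y \<and> (x, y) \<in> D)" using Xg by auto
  have uniq: "\<And>k y y'. (k, y) \<in> X' \<Longrightarrow> (k, y') \<in> X' \<Longrightarrow> y = y'"
    using ppmD[OF X'(2)] by (metis fst_conv prod.inject)
  have uniqr: "\<And>k k' y. (k, y) \<in> X' \<Longrightarrow> (k', y) \<in> X' \<Longrightarrow> k = k'"
    using ppmD[OF X'(2)] by (metis snd_conv prod.inject)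
  define q where "q k = (if k < n \<and> (k, p k) \<in> D then (THE y. (k, y) \<in> X') else p k)" for k
  have qX': "\<And>k. k < n \<Longrightarrow> (k, p k) \<in> D \<Longrightarrow> (k, q k) \<in> X'"
  proof -
    fix k assume k: "k < n" "(k, p k) \<in> D"
    then obtain y where y: "(k, y) \<in> X'" using colsame colX by blast
    then have "(THE y. (k, y) \<in> X') = y" using uniq by blast
    then show "(k, q k) \<in> X'" using y k unfolding q_def by simp
  qed
  have qX'': "\<And>k y. (k, y) \<in> X' \<Longrightarrow> q k = y \<and> k < n \<and> (k, p k) \<in> D"
  proof -
    fix k y assume ky: "(k, y) \<in> X'"
    then have k: "k < n" "(k, p k) \<in> D" using colsame colX by blast+
    then have "(k, q k) \<in> X'" using qX' by blast
    then show "q k = y \<and> k < n \<and> (k, p k) \<in> D" using uniq ky k by blast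
  qed
  have qout: "\<And>k. n \<le> k \<Longrightarrow> q k = k" unfolding q_def using pf(3) by auto
  have gq: "graph q n = X' \<union> (graph p n - D)"
  proof (intro set_eqI iffI)
    fix z assume "z \<in> graph q n"
    then obtain k where k: "k < n" "z = (k, q k)" unfolding graph_def by auto
    show "z \<in> X' \<union> (graph p n - D)"
    proof (cases "(k, p k) \<in> D")
      case True then show ?thesis using qX' k by auto
    next
      case False then show ?thesis using k unfolding q_def graph_def by auto
    qed
  next
    fix z assume z: "z \<in> X' \<union> (graph p n - D)"
    obtain k y where ky: "z = (k, y)" by (cases z)
    show "z \<in> graph q n"
    proof (cases "z \<in> X'")
      case True then show ?thesis using qX'' ky unfolding graph_def by auto
    next
      case False
      then have "k < n" "y = p k" "(k, p k) \<notin> D" using z ky unfolding graph_def by auto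
      then show ?thesis using ky unfolding graph_def q_def by auto
    qed
  qed
  have qin: "\<And>k. k < n \<Longrightarrow> q k < n"
  proof -
    fix k assume k: "k < n"
    show "q k < n"
    proof (cases "(k, p k) \<in> D")
      case True then show ?thesis using qX'[OF k True] X'(1) DS by auto
    next
      case False then show ?thesis using k pf(2) unfolding q_def by auto
    qed
  qed
  have qinj: "inj_on q {0..<n}"
  proof (rule inj_onI)
    fix a b assume ab: "a \<in> {0..<n}" "b \<in> {0..<n}" "q a = q b"
    have "(a, q a) \<in> graph q n" "(b, q b) \<in> graph q n" using ab unfolding graph_def by auto
    then have ga: "(a, q a) \<in> X' \<union> (graph p n - D)" and gb: "(b, q b) \<in> X' \<union> (graph p n - D)"
      using gq by auto
    show "a = b"
    proof (cases "(a, q a) \<in> X'")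
      case True
      show ?thesis
      proof (cases "(b, q b) \<in> X'")
        case True then show ?thesis using uniqr \<open>(a, q a) \<in> X'\<close> ab(3) by metis
      next
        case False
        then have "q b = p b" "(b, p b) \<notin> D" "b < n" using gb unfolding graph_def by auto
        moreover have "\<exists>x. (x, q a) \<in> X'" using True by auto
        then obtain x where "x < n" "p x = q a" "(x, q a) \<in> D" using rowsame rowX by blast
        ultimately have "x = b" using pf(1) ab(3) by (metis inj_onD lessThan_iff)
        then show ?thesis using \<open>(x, q a) \<in> D\<close> \<open>(b, p b) \<notin> D\<close> \<open>q b = p b\<close> ab(3) by simp
      qed
    next
      case False
      then have fa: "q a = p a" "(a, p a) \<notin> D" "a < n" using ga unfolding graph_def by auto
      show ?thesis
      proof (cases "(b, q b) \<in> X'")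
        case True
        have "\<exists>x. (x, q b) \<in> X'" using True by auto
        then obtain x where "x < n" "p x = q b" "(x, q b) \<in> D" using rowsame rowX by blast
        then have "x = a" using pf(1) fa ab(3) by (metis inj_onD lessThan_iff)
        then show ?thesis using \<open>(x, q b) \<in> D\<close> fa ab(3) by simp
      next
        case False
        then have "q b = p b" "b < n" using gb unfolding graph_def by auto
        then show ?thesis using fa ab(3) pf(1) by (metis inj_onD lessThan_iff)
      qed
    qed
  qed
  have qperm: "q permutes {0..<n}"
  proof (rule bij_imp_permutes)
    have "q ` {0..<n} \<subseteq> {0..<n}" using qin by auto
    then have "q ` {0..<n} = {0..<n}" using endo_inj_surj[OF _ _ qinj] by auto
    then show "bij_betw q {0..<n} {0..<n}" using qinj unfolding bij_betw_def by auto
    show "\<And>x. x \<notin> {0..<n} \<Longrightarrow> q x = x" using qout by auto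
  qed
  have Dq: "Dp q n = D"
  proof (intro set_eqI iffI)
    fix z assume "z \<in> Dp q n"
    then obtain i v k where z: "z = (i, v)" "k < n" "i < k" "v < q k" unfolding Dp_def by auto
    show "z \<in> D"
    proof (cases "(k, p k) \<in> D")
      case True
      then have "(k, q k) \<in> D" using qX' z(2) X'(1) by auto
      then obtain k' where "k' < n" "k < k'" "q k < p k'" unfolding D_def Dp_def by auto
      then show ?thesis using z unfolding D_def Dp_def by auto
    next
      case False
      then have "q k = p k" unfolding q_def by auto
      then show ?thesis using z unfolding D_def Dp_def by auto
    qed
  next
    fix z assume "z \<in> D"
    then obtain i v k where z: "z = (i, v)" "k < n" "i < k" "v < p k" unfolding D_def Dp_def by auto
    define M where "M = Max (p ` {k..<n})"
    have fin: "finite (p ` {k..<n})" "p ` {k..<n} \<noteq> {}" using z by auto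
    have M: "M \<in> p ` {k..<n}" "\<And>k'. k' \<in> {k..<n} \<Longrightarrow> p k' \<le> M" unfolding M_def using fin by auto
    then obtain km where km: "km \<in> {k..<n}" "p km = M" by auto
    have "(km, p km) \<notin> D"
    proof
      assume "(km, p km) \<in> D"
      then obtain k' where k': "k' < n" "km < k'" "p km < p k'" unfolding D_def Dp_def by auto
      then have "p k' \<le> M" using M(2) km by auto
      then show False using k'(3) km(2) by simp
    qed
    then have "q km = p km" unfolding q_def by auto
    moreover have "p k \<le> p km" using M(2) km z by auto
    ultimately show "z \<in> Dp q n" using z km unfolding Dp_def by auto
  qed
  have Xq: "Xp q n = X'" unfolding Xp_def Dq gq using X'(1) by auto
  have inv: "p \<circ> p = id \<longrightarrow> q \<circ> q = id"
  proof
    assume pp: "p \<circ> p = id"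
    then have ppk: "\<And>k. p (p k) = k" by (metis comp_apply id_apply)
    have Dsym: "\<And>i v. (i, v) \<in> D \<Longrightarrow> (v, i) \<in> D"
    proof -
      fix i v assume "(i, v) \<in> D"
      then obtain k where k: "k < n" "i < k" "v < p k" unfolding D_def Dp_def by auto
      then show "(v, i) \<in> D" unfolding D_def Dp_def using pf(2)[OF k(1)] ppk[of k]
        by (intro CollectI) (auto intro!: exI[of _ "p k"])
    qed
    have Gsym: "\<And>a b. (a, b) \<in> graph p n \<Longrightarrow> (b, a) \<in> graph p n"
      unfolding graph_def using pf(2) ppk by force
    have Xsym: "prod.swap ` X = X"
    proof -
      have "\<And>a b. (a, b) \<in> X \<Longrightarrow> (b, a) \<in> X" using Dsym Gsym unfolding X_def Xp_def D_def by auto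
      then show ?thesis by force
    qed
    have bdsym: "\<And>c. c \<in> bd D \<Longrightarrow> prod.swap c \<in> bd D"
      unfolding bd_def using Dsym by auto
    have gvX: "\<And>c. gv X (prod.swap c) = gv X c"
      unfolding gv_def using grow_swap[of X] Xsym by (metis fst_swap snd_swap)
    define Y where "Y = prod.swap ` X'"
    have YD: "Y \<subseteq> D" unfolding Y_def using X'(1) Dsym by auto
    have pY: "ppm Y" using X'(2) unfolding Y_def ppm_def by auto
    have "\<forall>c\<in>bd D. gv Y c = gv X' c"
    proof
      fix c assume c: "c \<in> bd D"
      have "gv Y c = gv X' (prod.swap c)" unfolding Y_def gv_def using grow_swap by simp
      also have "\<dots> = conj (gv X (prod.swap c))" using X'(3) bdsym[OF c] by simp
      also have "\<dots> = gv X' c" using gvX X'(3) c by simp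
      finally show "gv Y c = gv X' c" .
    qed
    then have YX: "Y = X'" using board_inj[OF fD dD YD X'(1) pY X'(2)] by simp
    have gqsym: "\<And>a b. (a, b) \<in> graph q n \<Longrightarrow> (b, a) \<in> graph q n"
    proof -
      fix a b assume "(a, b) \<in> graph q n"
      then have "(a, b) \<in> X' \<or> ((a, b) \<in> graph p n \<and> (a, b) \<notin> D)" using gq by auto
      then show "(b, a) \<in> graph q n"
      proof
        assume "(a, b) \<in> X'"
        then have "(b, a) \<in> Y" unfolding Y_def by force
        then show ?thesis using YX gq by auto
      next
        assume "(a, b) \<in> graph p n \<and> (a, b) \<notin> D"
        then show ?thesis using Gsym Dsym gq by blast
      qed
    qed
    show "q \<circ> q = id"
    proof
      fix k
      show "(q \<circ> q) k = id k"
      proof (cases "k < n")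
        case True
        then have "(k, q k) \<in> graph q n" unfolding graph_def by auto
        then have "(q k, k) \<in> graph q n" using gqsym by blast
        then show ?thesis using graph_pt by fastforce
      next
        case False then show ?thesis using qout by simp
      qed
    qed
  qed
  have "\<forall>c\<in>bd D. gv (Xp q n) c = conj (gv X c)" using X'(3) Xq by simp
  moreover have "\<forall>k. (k, p k) \<notin> D \<longrightarrow> q k = p k" unfolding q_def by auto
  ultimately show ?thesis using qperm Dq inv unfolding D_def X_def by blast
qed


lemma card_le:
  assumes d: "d \<ge> 1" and L: "L \<ge> 1"
  shows "card (Sdl n d L) \<le> card (Sdl n L d) \<and> card (Idl n d L) \<le> card (Idl n L d)"
proof -
  define R where "R p q \<longleftrightarrow> q \<in> Sdl n L d \<and> Dp q n = Dp p n
     \<and> (\<forall>c\<in>bd (Dp p n). gv (Xp q n) c = conj (gv (Xp p n) c))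
     \<and> (\<forall>k. (k, p k) \<notin> Dp p n \<longrightarrow> q k = p k) \<and> (p \<circ> p = id \<longrightarrow> q \<circ> q = id)" for p q
  have ex: "\<exists>q. R p q" if pS: "p \<in> Sdl n d L" for p
  proof -
    have p: "p permutes {0..<n}" using pS unfolding Sdl_def by auto
    obtain q where q: "q permutes {0..<n}" "Dp q n = Dp p n" "\<forall>c\<in>bd (Dp p n). gv (Xp q n) c = conj (gv (Xp p n) c)"
      "\<forall>k. (k, p k) \<notin> Dp p n \<longrightarrow> q k = p k" "p \<circ> p = id \<longrightarrow> q \<circ> q = id"
      using construct[OF p] by blast
    have bp: "\<forall>c\<in>bd (Dp p n). boxd d L (gv (Xp p n) c)" using class_bd[OF p d L] pS by blast
    have "\<forall>c\<in>bd (Dp q n). boxd L d (gv (Xp q n) c)"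
    proof
      fix c assume c: "c \<in> bd (Dp q n)"
      then have c': "c \<in> bd (Dp p n)" using q(2) by simp
      have "ptn (gv (Xp p n) c)" using grow_ptn[OF ppm_Xp[OF p]] unfolding gv_def by simp
      then show "boxd L d (gv (Xp q n) c)" using q(3) c' bp boxd_conj by auto
    qed
    then have "q \<in> Sdl n L d" using class_bd[OF q(1) L d] by blast
    then show ?thesis unfolding R_def using q by blast
  qed
  define F where "F p = (SOME q. R p q)" for p
  have F: "R p (F p)" if "p \<in> Sdl n d L" for p
    unfolding F_def using someI_ex[OF ex[OF that]] .
  have inj: "inj_on F (Sdl n d L)"
  proof (rule inj_onI)
    fix p1 p2 assume p1: "p1 \<in> Sdl n d L" and p2: "p2 \<in> Sdl n d L" and eq: "F p1 = F p2"
    have pp1: "p1 permutes {0..<n}" and pp2: "p2 permutes {0..<n}" using p1 p2 unfolding Sdl_def by auto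
    note R1 = F[OF p1, unfolded R_def] and R2 = F[OF p2, unfolded R_def]
    define D where "D = Dp p1 n"
    have D2: "Dp p2 n = D" using R1 R2 eq unfolding D_def by metis
    have "\<forall>c\<in>bd D. gv (Xp p1 n) c = gv (Xp p2 n) c"
    proof
      fix c assume c: "c \<in> bd D"
      have pt: "ptn (gv (Xp p1 n) c)" "ptn (gv (Xp p2 n) c)"
        using grow_ptn[OF ppm_Xp[OF pp1]] grow_ptn[OF ppm_Xp[OF pp2]] unfolding gv_def by auto
      have "conj (gv (Xp p1 n) c) = gv (Xp (F p1) n) c" using R1 c unfolding D_def by auto
      also have "\<dots> = conj (gv (Xp p2 n) c)" using R2 c D2 eq by auto
      finally show "gv (Xp p1 n) c = gv (Xp p2 n) c" using conj_inj[OF pt] by simp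
    qed
    then have XX: "Xp p1 n = Xp p2 n"
      using board_inj[OF Dp_finite[OF pp1] Dp_downset Xp_sub, of "Xp p2 n"] Xp_sub[of p2 n] D2
        ppm_Xp[OF pp1] ppm_Xp[OF pp2] unfolding D_def by auto
    show "p1 = p2"
    proof
      fix k
      have DS: "D \<subseteq> {..<n} \<times> {..<n}" unfolding D_def using Dp_sub[OF pp1] .
      show "p1 k = p2 k"
      proof (cases "(k, p1 k) \<in> D")
        case True
        then have "k < n" using DS by auto
        then have "(k, p1 k) \<in> Xp p1 n" using True unfolding Xp_def graph_def D_def by auto
        then have "(k, p1 k) \<in> graph p2 n" using XX unfolding Xp_def by auto
        then show ?thesis using graph_pt by fastforce
      next
        case False
        have "(k, p2 k) \<notin> D"
        proof
          assume a: "(k, p2 k) \<in> D"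
          then have "k < n" using DS by auto
          then have "(k, p2 k) \<in> Xp p2 n" using a D2 unfolding Xp_def graph_def by auto
          then have "(k, p2 k) \<in> graph p1 n" using XX unfolding Xp_def by auto
          then have "p2 k = p1 k" using graph_pt by fastforce
          then show False using a False by simp
        qed
        then have "F p1 k = p1 k" "F p2 k = p2 k" using R1 R2 False D2 unfolding D_def by auto
        then show ?thesis using eq by simp
      qed
    qed
  qed
  have finS: "finite (Sdl n L d)"
    by (rule finite_subset[OF _ finite_permutations[of "{0..<n}"]]) (auto simp: Sdl_def)
  have sub1: "F ` Sdl n d L \<subseteq> Sdl n L d" using F unfolding R_def by auto
  have c1: "card (Sdl n d L) \<le> card (Sdl n L d)" using card_inj_on_le[OF inj sub1 finS] .
  have IS: "Idl n d L \<subseteq> Sdl n d L" unfolding Idl_def by auto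
  have sub2: "F ` Idl n d L \<subseteq> Idl n L d" using F IS unfolding R_def Idl_def by auto
  have finI: "finite (Idl n L d)" using finS unfolding Idl_def by auto
  have c2: "card (Idl n d L) \<le> card (Idl n L d)" using card_inj_on_le[OF inj_on_subset[OF inj IS] sub2 finI] .
  show ?thesis using c1 c2 by simp
qed

theorem corollary10p2:
  fixes n d L :: nat
  assumes "n \<ge> 1" and "d \<ge> 1" and "L \<ge> 1"
  shows "card (Sdl n d L) = card (Sdl n L d) \<and> card (Idl n d L) = card (Idl n L d)"
  using card_le[OF assms(2,3), of n] card_le[OF assms(3,2), of n] by auto


end
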